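(* Let $\rho\in(\tfrac23,1]$ and $X\in C^\rho([0,1]^2,V)$ (i.e. $X$ continuous with $\sup\frac{\|X_{s_1,t_1}-X_{s_2,t_2}\|}{|(s_1,t_1)-(s_2,t_2)|^\rho}<\infty$). Define $\mathbb X=(\mathbf x^h,\mathbf x^v,\mathbf X)$ valued in $\mathbf G^{(\le2)}$ by $\mathbf x^{h,(1)}_{s_1,s_2;t}=X_{s_2,t}-X_{s_1,t}$, $\mathbf x^{h,(2)}_{s_1,s_2;t}=S^{(2)}(X|_{[s_1,s_2]\times\{t\}})$, $\mathbf x^{v,(1)}_{s;t_1,t_2}=X_{s,t_2}-X_{s,t_1}$, $\mathbf x^{v,(2)}_{s;t_1,t_2}=S^{(2)}(X|_{\{s\}\times[t_1,t_2]})$, and let $\mathbf X^{(2)}_{s_1,s_2;t_1,t_2}$ be the element of $T_1^{(2)}(V)=\Lambda^2V$ corresponding to $(\mathbf x^h_{s_1,s_2;t_1}\cdot\mathbf x^v_{s_2;t_1,t_2}\cdot(\mathbf x^h_{s_1,s_2;t_2})^{-1}\cdot(\mathbf x^v_{s_1;t_1,t_2})^{-1})^{(2)}$. Then (for a suitable choice of the constant $C_\omega$) $\mathbb X$ is a $\rho$-Hölder multiplicative double group functional valued in $\mathbf G^{(\le2)}$.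
   Context: $V$ is a finite-dimensional real Hilbert space with orthonormal basis $e_1,\dots,e_d$; $T_0^{(\le2)}=\mathbb R\oplus V\oplus V^{\otimes2}$ with product truncated at level 2 and words orthonormal. $S^{(2)}$ of a path is the level-2 component of its path signature, $\int_{a<u_1<u_2<b}dx_{u_1}\otimes dx_{u_2}$ (a Young integral for $\rho>1/2$). $G_0^{(\le2)}=\{\exp(x):x\in V\oplus[V,V]\}$ (truncated exponential). $T_1^{(2)}(V)=\Lambda^2V$ (orthonormal basis $e_i\wedge e_j$, $i<j$), $\delta(v\wedge w)=vw-wv$, and $G_1^{(\le2)}=\{1+E:E\in\Lambda^2V\}\subset\mathbb R\oplus\Lambda^2V$, with product $(1+E)(1+F)=1+E+F$; the level-2 part of the boundary product is antisymmetric and is identified with the element of $\Lambda^2V$ mapped to it by $\delta$. $g\in G_0^{(\le2)}$ acts by $g\triangleright(1+E)=1+g E g^{-1}$ truncated at level 2 (i.e. $1+E$). Rough-surface notions. $\sigma=\rho/2$; constant $C_\omega>0$, $\omega(a,b)=C_\omega|b-a|$, $(x)!=\Gamma(x+1)$; fixed $\beta>\max\{\frac2{\rho^2}(1+\sum_{r\ge3}(\frac2{r-2})^{\rho(\lfloor1/\rho\rfloor+1)}),\frac32\sum_{m\ge0}4^{m(1-(\lfloor2/\rho\rfloor+1)\rho)}\}$; $\Delta^2=\{0\le a\le b\le1\}$; $W^k_\sigma(s_1,s_2;t_1,t_2)=2^{2k\sigma}\sum_{q=1}^{2k-1}\frac{\omega^{q\sigma}(s_1,s_2)\omega^{(2k-q)\sigma}(t_1,t_2)}{(q\sigma)!((2k-q)\sigma)!}$.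 A double group functional valued in $\mathbf G^{(\le2)}$: $\mathbf x^h:\Delta^2\times[0,1]\to G_0^{(\le2)}$, $\mathbf x^v:[0,1]\times\Delta^2\to G_0^{(\le2)}$, $\mathbf X:\Delta^2\times\Delta^2\to G_1^{(\le2)}$ with $\mathbf x^h_{s_1,s_2;t}\mathbf x^h_{s_2,s_3;t}=\mathbf x^h_{s_1,s_3;t}$, $\mathbf x^v_{s;t_1,t_2}\mathbf x^v_{s;t_2,t_3}=\mathbf x^v_{s;t_1,t_3}$, and $\delta(\mathbf X_{s_1,s_2;t_1,t_2})=\mathbf x^h_{s_1,s_2;t_1}\mathbf x^v_{s_2;t_1,t_2}(\mathbf x^h_{s_1,s_2;t_2})^{-1}(\mathbf x^v_{s_1;t_1,t_2})^{-1}$. Multiplicative: $\mathbf X_{s_1,s_3;t_1,t_2}=(\mathbf x^h_{s_1,s_2;t_1}\triangleright\mathbf X_{s_2,s_3;t_1,t_2})*\mathbf X_{s_1,s_2;t_1,t_2}$ and $\mathbf X_{s_1,s_2;t_1,t_3}=\mathbf X_{s_1,s_2;t_1,t_2}*(\mathbf x^v_{s_1;t_1,t_2}\triangleright\mathbf X_{s_1,s_2;t_2,t_3})$. $\rho$-Hölder: for $k\in\{1,2\}$, $\|\mathbf x^{h,(k)}_{s_1,s_2;t}\|\le\frac{\omega^{k\rho}(s_1,s_2)}{\beta(k\rho)!}$, $\|\mathbf x^{v,(k)}_{s;t_1,t_2}\|\le\frac{\omega^{k\rho}(t_1,t_2)}{\beta(k\rho)!}$, $\|\mathbf x^{h,(k)}_{s_1,s_2;t_1}-\mathbf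 x^{h,(k)}_{s_1,s_2;t_2}\|\le\frac{\omega^{(2k-1)\sigma}(s_1,s_2)\omega^\sigma(t_1,t_2)}{\beta((2k-1)\sigma)!(\sigma)!}$, the symmetric condition for $\mathbf x^v$ with the roles of $s,t$ exchanged, and $\|\mathbf X^{(k)}_{s_1,s_2;t_1,t_2}\|\le W^k_\sigma/\beta$. *)

theory Defs
  imports "HOL-Analysis.Analysis"
begin

text \<open>An element of V (x) V is represented as a real bilinear form on V:
  the coefficient of the word e_i e_j is A e_i e_j.\<close>

type_synonym 'v tens2 = "'v \<Rightarrow> 'v \<Rightarrow> real"
type_synonym 'v talg = "real \<times> 'v \<times> 'v tens2"

definition tprod_vec :: "'v::real_inner \<Rightarrow> 'v \<Rightarrow> 'v tens2" where
  "tprod_vec a b = (\<lambda>u w. (a \<bullet> u) * (b \<bullet> w))"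

definition tone :: "'v::real_inner talg" where
  "tone = (1, 0, (\<lambda>u w. 0))"

definition tmul :: "'v::real_inner talg \<Rightarrow> 'v talg \<Rightarrow> 'v talg" where
  "tmul a b = (case a of (a0, a1, a2) \<Rightarrow> case b of (b0, b1, b2) \<Rightarrow>
     (a0 * b0, a0 *\<^sub>R b1 + b0 *\<^sub>R a1,
      (\<lambda>u w. a0 * b2 u w + tprod_vec a1 b1 u w + b0 * a2 u w)))"

text \<open>Inverse in the truncated tensor algebra (for invertible a, i.e. level-0 part nonzero):
  with a = a0 (1 + y), a^{-1} = a0^{-1} (1 - y + y^2).\<close>
definition tinv :: "'v::real_inner talg \<Rightarrow> 'v talg" where
  "tinv a = (case a of (a0, a1, a2) \<Rightarrow>
     (1 / a0, - ((1 / a0 ^ 2) *\<^sub>R a1),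
      (\<lambda>u w. (1 / a0) * (- a2 u w / a0 + tprod_vec a1 a1 u w / a0 ^ 2))))"

definition texp :: "'v::real_inner \<Rightarrow> 'v tens2 \<Rightarrow> 'v talg" where
  "texp v B = (1, v, (\<lambda>u w. B u w + tprod_vec v v u w / 2))"

text \<open>Level-2 part of [V,V] (span of the commutators vw - wv) = antisymmetric tensors.\<close>
definition lie2 :: "'v::real_inner tens2 set" where
  "lie2 = {B. bilinear B \<and> (\<forall>u w. B u w = - B w u)}"

definition G0 :: "'v::real_inner talg set" where
  "G0 = {texp v B | v B. B \<in> lie2}"

definition t2norm :: "'v::euclidean_space tens2 \<Rightarrow> real" where
  "t2norm A = sqrt (\<Sum>i\<in>Basis. \<Sum>j\<in>Basis. (A i j)\<^sup>2)"

text \<open>An element E of Lambda^2 V is represented by its image delta(E) in V(x)V, an antisymmetric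
  tensor (delta(v/\w) = vw - wv). With e_i/\e_j (i<j) orthonormal, ||E||^2 = sum_{i<j} E_ij^2
  = (1/2) sum_{i,j} delta(E)_{ij}^2.  An element 1+E of G_1 is represented by E; its product
  is (1+E)(1+F) = 1+E+F, and delta(1+E) = 1 + delta(E) = (1, 0, E) in T_0.\<close>

definition lam2 :: "'v::real_inner tens2 set" where
  "lam2 = {E. bilinear E \<and> (\<forall>u w. E u w = - E w u)}"

definition lam2norm :: "'v::euclidean_space tens2 \<Rightarrow> real" where
  "lam2norm E = sqrt ((\<Sum>i\<in>Basis. \<Sum>j\<in>Basis. (E i j)\<^sup>2) / 2)"

definition g1mul :: "'v tens2 \<Rightarrow> 'v tens2 \<Rightarrow> 'v tens2" where
  "g1mul E F = (\<lambda>u w. E u w + F u w)"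

definition act :: "'v::real_inner talg \<Rightarrow> 'v tens2 \<Rightarrow> 'v tens2" where
  "act g E = snd (snd (tmul (tmul g (0, 0, E)) (tinv g)))"

definition is_partition :: "real \<Rightarrow> real \<Rightarrow> real list \<Rightarrow> bool" where
  "is_partition a b P \<longleftrightarrow> P \<noteq> [] \<and> hd P = a \<and> last P = b \<and> sorted_wrt (<) P"

definition mesh :: "real list \<Rightarrow> real" where
  "mesh P = Max (set (0 # map (\<lambda>k. P ! (k + 1) - P ! k) [0..<length P - 1]))"

text \<open>Left-point Riemann-Stieltjes sum for int_{a<u1<u2<b} dx_{u1} (x) dx_{u2}
  = int_a^b (x_u - x_a) (x) dx_u, tested against (u, w).\<close>
definition rs_sum2 :: "(real \<Rightarrow> 'v::real_inner) \<Rightarrow> real list \<Rightarrow> 'v \<Rightarrow> 'v \<Rightarrow> real" where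
  "rs_sum2 x P u w =
     (\<Sum>k<length P - 1. ((x (P ! k) - x (P ! 0)) \<bullet> u) * ((x (P ! (k + 1)) - x (P ! k)) \<bullet> w))"

definition S2 :: "(real \<Rightarrow> 'v::real_inner) \<Rightarrow> real \<Rightarrow> real \<Rightarrow> 'v tens2" where
  "S2 x a b = (\<lambda>u w. THE L. \<forall>\<epsilon>>0. \<exists>\<delta>>0. \<forall>P. is_partition a b P \<and> mesh P < \<delta> \<longrightarrow>
                   \<bar>rs_sum2 x P u w - L\<bar> < \<epsilon>)"

definition holder_2d :: "real \<Rightarrow> (real \<times> real \<Rightarrow> 'v::real_normed_vector) \<Rightarrow> bool" where
  "holder_2d \<rho> X \<longleftrightarrow> continuous_on ({0..1} \<times> {0..1}) X \<and>
     (\<exists>C. \<forall>p\<in>{0..1} \<times> {0..1}. \<forall>q\<in>{0..1} \<times> {0..1}. norm (X p - X q) \<le> C * dist p q powr \<rho>)"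

definition xh_of :: "(real \<times> real \<Rightarrow> 'v::real_inner) \<Rightarrow> real \<Rightarrow> real \<Rightarrow> real \<Rightarrow> 'v talg" where
  "xh_of X s1 s2 t = (1, X (s2, t) - X (s1, t), S2 (\<lambda>s. X (s, t)) s1 s2)"

definition xv_of :: "(real \<times> real \<Rightarrow> 'v::real_inner) \<Rightarrow> real \<Rightarrow> real \<Rightarrow> real \<Rightarrow> 'v talg" where
  "xv_of X s t1 t2 = (1, X (s, t2) - X (s, t1), S2 (\<lambda>t. X (s, t)) t1 t2)"

definition XX_of :: "(real \<times> real \<Rightarrow> 'v::real_inner) \<Rightarrow> real \<Rightarrow> real \<Rightarrow> real \<Rightarrow> real \<Rightarrow> 'v tens2" where
  "XX_of X s1 s2 t1 t2 = snd (snd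
     (tmul (tmul (tmul (xh_of X s1 s2 t1) (xv_of X s2 t1 t2)) (tinv (xh_of X s1 s2 t2)))
           (tinv (xv_of X s1 t1 t2))))"

definition fct :: "real \<Rightarrow> real" where
  "fct x = Gamma (x + 1)"

definition omega :: "real \<Rightarrow> real \<Rightarrow> real \<Rightarrow> real" where
  "omega C a b = C * \<bar>b - a\<bar>"

definition beta_bound :: "real \<Rightarrow> real" where
  "beta_bound \<rho> = max
     (2 / \<rho>\<^sup>2 * (1 + (\<Sum>n. (2 / (real n + 1)) powr (\<rho> * (of_int \<lfloor>1 / \<rho>\<rfloor> + 1)))))
     (3 / 2 * (\<Sum>m. 4 powr (real m * (1 - (of_int \<lfloor>2 / \<rho>\<rfloor> + 1) * \<rho>))))"

definition Wk :: "real \<Rightarrow> real \<Rightarrow> nat \<Rightarrow> real \<Rightarrow> real \<Rightarrow> real \<Rightarrow> real \<Rightarrow> real" where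
  "Wk C \<sigma> k s1 s2 t1 t2 = 2 powr (2 * real k * \<sigma>) *
     (\<Sum>q=1..2*k-1. omega C s1 s2 powr (real q * \<sigma>) * omega C t1 t2 powr (real (2*k-q) * \<sigma>)
        / (fct (real q * \<sigma>) * fct (real (2*k-q) * \<sigma>)))"

definition double_group_functional ::
  "(real \<Rightarrow> real \<Rightarrow> real \<Rightarrow> 'v::real_inner talg) \<Rightarrow> (real \<Rightarrow> real \<Rightarrow> real \<Rightarrow> 'v talg)
   \<Rightarrow> (real \<Rightarrow> real \<Rightarrow> real \<Rightarrow> real \<Rightarrow> 'v tens2) \<Rightarrow> bool" where
  "double_group_functional xh xv XX \<longleftrightarrow>
    (\<forall>s1 s2 t. 0 \<le> s1 \<and> s1 \<le> s2 \<and> s2 \<le> 1 \<and> 0 \<le> t \<and> t \<le> 1 \<longrightarrow> xh s1 s2 t \<in> G0) \<and>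
    (\<forall>s t1 t2. 0 \<le> s \<and> s \<le> 1 \<and> 0 \<le> t1 \<and> t1 \<le> t2 \<and> t2 \<le> 1 \<longrightarrow> xv s t1 t2 \<in> G0) \<and>
    (\<forall>s1 s2 t1 t2. 0 \<le> s1 \<and> s1 \<le> s2 \<and> s2 \<le> 1 \<and> 0 \<le> t1 \<and> t1 \<le> t2 \<and> t2 \<le> 1 \<longrightarrow>
        XX s1 s2 t1 t2 \<in> lam2) \<and>
    (\<forall>s1 s2 s3 t. 0 \<le> s1 \<and> s1 \<le> s2 \<and> s2 \<le> s3 \<and> s3 \<le> 1 \<and> 0 \<le> t \<and> t \<le> 1 \<longrightarrow>
        tmul (xh s1 s2 t) (xh s2 s3 t) = xh s1 s3 t) \<and>
    (\<forall>s t1 t2 t3. 0 \<le> s \<and> s \<le> 1 \<and> 0 \<le> t1 \<and> t1 \<le> t2 \<and> t2 \<le> t3 \<and> t3 \<le> 1 \<longrightarrow>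
        tmul (xv s t1 t2) (xv s t2 t3) = xv s t1 t3) \<and>
    (\<forall>s1 s2 t1 t2. 0 \<le> s1 \<and> s1 \<le> s2 \<and> s2 \<le> 1 \<and> 0 \<le> t1 \<and> t1 \<le> t2 \<and> t2 \<le> 1 \<longrightarrow>
        (1, 0, XX s1 s2 t1 t2) =
          tmul (tmul (tmul (xh s1 s2 t1) (xv s2 t1 t2)) (tinv (xh s1 s2 t2))) (tinv (xv s1 t1 t2)))"

definition multiplicative_dgf ::
  "(real \<Rightarrow> real \<Rightarrow> real \<Rightarrow> 'v::real_inner talg) \<Rightarrow> (real \<Rightarrow> real \<Rightarrow> real \<Rightarrow> 'v talg)
   \<Rightarrow> (real \<Rightarrow> real \<Rightarrow> real \<Rightarrow> real \<Rightarrow> 'v tens2) \<Rightarrow> bool" where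
  "multiplicative_dgf xh xv XX \<longleftrightarrow>
    (\<forall>s1 s2 s3 t1 t2. 0 \<le> s1 \<and> s1 \<le> s2 \<and> s2 \<le> s3 \<and> s3 \<le> 1 \<and> 0 \<le> t1 \<and> t1 \<le> t2 \<and> t2 \<le> 1 \<longrightarrow>
        XX s1 s3 t1 t2 = g1mul (act (xh s1 s2 t1) (XX s2 s3 t1 t2)) (XX s1 s2 t1 t2)) \<and>
    (\<forall>s1 s2 t1 t2 t3. 0 \<le> s1 \<and> s1 \<le> s2 \<and> s2 \<le> 1 \<and> 0 \<le> t1 \<and> t1 \<le> t2 \<and> t2 \<le> t3 \<and> t3 \<le> 1 \<longrightarrow>
        XX s1 s2 t1 t3 = g1mul (XX s1 s2 t1 t2) (act (xv s1 t1 t2) (XX s1 s2 t2 t3)))"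

definition lvlnorm :: "nat \<Rightarrow> 'v::euclidean_space talg \<Rightarrow> real" where
  "lvlnorm k g = (if k = 1 then norm (fst (snd g)) else t2norm (snd (snd g)))"

definition lvldiff :: "'v::euclidean_space talg \<Rightarrow> 'v talg \<Rightarrow> 'v talg" where
  "lvldiff g h = (fst g - fst h, fst (snd g) - fst (snd h), (\<lambda>u w. snd (snd g) u w - snd (snd h) u w))"

definition rho_holder_dgf ::
  "real \<Rightarrow> real \<Rightarrow> real \<Rightarrow> (real \<Rightarrow> real \<Rightarrow> real \<Rightarrow> 'v::euclidean_space talg)
   \<Rightarrow> (real \<Rightarrow> real \<Rightarrow> real \<Rightarrow> 'v talg) \<Rightarrow> (real \<Rightarrow> real \<Rightarrow> real \<Rightarrow> real \<Rightarrow> 'v tens2) \<Rightarrow> bool" where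
  "rho_holder_dgf \<rho> \<beta> C xh xv XX \<longleftrightarrow> (let \<sigma> = \<rho> / 2 in
    (\<forall>k\<in>{1, 2::nat}.
      (\<forall>s1 s2 t. 0 \<le> s1 \<and> s1 \<le> s2 \<and> s2 \<le> 1 \<and> 0 \<le> t \<and> t \<le> 1 \<longrightarrow>
         lvlnorm k (xh s1 s2 t) \<le> omega C s1 s2 powr (real k * \<rho>) / (\<beta> * fct (real k * \<rho>))) \<and>
      (\<forall>s t1 t2. 0 \<le> s \<and> s \<le> 1 \<and> 0 \<le> t1 \<and> t1 \<le> t2 \<and> t2 \<le> 1 \<longrightarrow>
         lvlnorm k (xv s t1 t2) \<le> omega C t1 t2 powr (real k * \<rho>) / (\<beta> * fct (real k * \<rho>))) \<and>
      (\<forall>s1 s2 t1 t2. 0 \<le> s1 \<and> s1 \<le> s2 \<and> s2 \<le> 1 \<and> 0 \<le> t1 \<and> t1 \<le> 1 \<and> 0 \<le> t2 \<and> t2 \<le> 1 \<longrightarrow>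
         lvlnorm k (lvldiff (xh s1 s2 t1) (xh s1 s2 t2)) \<le>
           omega C s1 s2 powr ((2 * real k - 1) * \<sigma>) * omega C t1 t2 powr \<sigma>
             / (\<beta> * fct ((2 * real k - 1) * \<sigma>) * fct \<sigma>)) \<and>
      (\<forall>s1 s2 t1 t2. 0 \<le> t1 \<and> t1 \<le> t2 \<and> t2 \<le> 1 \<and> 0 \<le> s1 \<and> s1 \<le> 1 \<and> 0 \<le> s2 \<and> s2 \<le> 1 \<longrightarrow>
         lvlnorm k (lvldiff (xv s1 t1 t2) (xv s2 t1 t2)) \<le>
           omega C t1 t2 powr ((2 * real k - 1) * \<sigma>) * omega C s1 s2 powr \<sigma>
             / (\<beta> * fct ((2 * real k - 1) * \<sigma>) * fct \<sigma>))) \<and>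
    (\<forall>s1 s2 t1 t2. 0 \<le> s1 \<and> s1 \<le> s2 \<and> s2 \<le> 1 \<and> 0 \<le> t1 \<and> t1 \<le> t2 \<and> t2 \<le> 1 \<longrightarrow>
         lam2norm (XX s1 s2 t1 t2) \<le> Wk C \<sigma> 2 s1 s2 t1 t2 / \<beta>))"

end

theory Submission
  imports Defs
begin

fun rsum :: "(real \<Rightarrow> real \<Rightarrow> real) \<Rightarrow> real list \<Rightarrow> real" where
  "rsum F (x # y # zs) = F x y + rsum F (y # zs)"
| "rsum F _ = 0"

lemma rsum_idx: "rsum F P = (\<Sum>k<length P - 1. F (P ! k) (P ! (k + 1)))"
proof (induction F P rule: rsum.induct)
  case (1 F x y zs)
  have "(\<Sum>k<length (x # y # zs) - 1. F ((x # y # zs) ! k) ((x # y # zs) ! (k + 1)))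
      = (\<Sum>k<Suc (length (y # zs) - 1). F ((x # y # zs) ! k) ((x # y # zs) ! (k + 1)))" by simp
  also have "\<dots> = F x y + (\<Sum>k<length (y # zs) - 1. F ((y # zs) ! k) ((y # zs) ! (k + 1)))"
    by (subst sum.lessThan_Suc_shift) simp
  finally show ?case using 1 by simp
qed auto

lemma rsum_append: "rsum F (L @ y # M) = rsum F (L @ [y]) + rsum F (y # M)"
proof (induction L)
  case Nil then show ?case by simp
next
  case (Cons a L)
  then show ?case by (cases L) auto
qed

lemma rsum_lin: "rsum (\<lambda>s t. F s t + k * G s t) P = rsum F P + k * rsum G P"
  by (induction F P rule: rsum.induct) (auto simp: algebra_simps)

lemma rsum_diff: "rsum (\<lambda>s t. F s t - G s t) P = rsum F P - rsum G P"
  by (induction F P rule: rsum.induct) (auto simp: algebra_simps)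

lemma rsum_add: "rsum (\<lambda>s t. F s t + G s t) P = rsum F P + rsum G P"
  by (induction F P rule: rsum.induct) (auto simp: algebra_simps)

lemma rsum_cmul: "rsum (\<lambda>s t. k * F s t) P = k * rsum F P"
  by (induction F P rule: rsum.induct) (auto simp: algebra_simps)

lemma rsum_tele: "P \<noteq> [] \<Longrightarrow> rsum (\<lambda>s t. f t - f s) P = f (last P) - f (hd P)"
  by (induction "\<lambda>s t. f t - f s :: real" P rule: rsum.induct) auto

lemma part_Cons2:
  assumes "is_partition a b (x # y # zs)"
  shows "x = a" "x < y" "is_partition y b (y # zs)" "y \<le> b"
proof -
  show "x = a" "x < y" "is_partition y b (y # zs)" using assms by (auto simp: is_partition_def)
  have "last (y#zs) = b" using assms by (auto simp: is_partition_def)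
  moreover have "sorted_wrt (<) (y#zs)" using assms by (auto simp: is_partition_def)
  ultimately show "y \<le> b"
    by (metis last.simps last_in_set list.set_intros(1) order.strict_implies_order order_refl strict_sorted_simps(2) set_ConsD)
qed

lemma part_single: "is_partition a b [x] \<longleftrightarrow> x = a \<and> a = b"
  by (auto simp: is_partition_def)

lemma part_le: "is_partition a b P \<Longrightarrow> a \<le> b"
proof (induction P arbitrary: a)
  case (Cons x zs)
  show ?case
  proof (cases zs)
    case Nil then show ?thesis using Cons by (simp add: part_single)
  next
    case (Cons y ys)
    then show ?thesis using part_Cons2[of a b x y ys] Cons.prems by force
  qed
qed (simp add: is_partition_def)

lemma part_set: "is_partition a b P \<Longrightarrow> x \<in> set P \<Longrightarrow> a \<le> x \<and> x \<le> b"
proof (induction P arbitrary: a)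
  case (Cons z zs)
  show ?case
  proof (cases zs)
    case Nil then show ?thesis using Cons by (auto simp add: part_single)
  next
    case (Cons y ys)
    have p: "z = a" "z < y" "is_partition y b (y # ys)" "y \<le> b"
      using part_Cons2[of a b z y ys] Cons.prems \<open>zs = _\<close> by auto
    show ?thesis
    proof (cases "x = z")
      case True then show ?thesis using p by simp
    next
      case False
      then have "x \<in> set (y#ys)" using Cons.prems \<open>zs = _\<close> by auto
      then show ?thesis using Cons.IH[of y] p \<open>zs = _\<close> by auto
    qed
  qed
qed (simp add: is_partition_def)

lemma part_eq: "is_partition a a P \<Longrightarrow> P = [a]"
proof (cases P)
  case (Cons x zs)
  assume h: "is_partition a a P"
  show ?thesis
  proof (cases zs)
    case Nil then show ?thesis using h Cons by (simp add: part_single)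
  next
    case (Cons y ys)
    then show ?thesis using part_Cons2[of a a x y ys] h \<open>P = _\<close> part_le[of y a] by force
  qed
qed (simp add: is_partition_def)

lemma part_Cons2_iff: "is_partition a b (x # y # zs) \<longleftrightarrow> x = a \<and> x < y \<and> is_partition y b (y # zs)"
proof
  assume "is_partition a b (x # y # zs)" then show "x = a \<and> x < y \<and> is_partition y b (y # zs)"
    using part_Cons2 by blast
next
  assume h: "x = a \<and> x < y \<and> is_partition y b (y # zs)"
  then have "\<forall>z\<in>set (y#zs). y \<le> z" using part_set by blast
  then show "is_partition a b (x # y # zs)" using h by (auto simp: is_partition_def)
qed

definition Zs :: "real \<Rightarrow> nat \<Rightarrow> real" where
  "Zs \<theta> n = (\<Sum>r=1..n. (2 / real r) powr \<theta>)"

lemma Zs_Suc: "Zs \<theta> (Suc n) = Zs \<theta> n + (2 / real (Suc n)) powr \<theta>"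
  unfolding Zs_def by (simp add: sum.cl_ivl_Suc)

lemma Zs_nonneg: "Zs \<theta> n \<ge> 0"
  unfolding Zs_def by (intro sum_nonneg) auto

lemma tele1: "(\<Sum>k=1..(n::nat). f k - f (k - 1)) = f n - (f 0 :: real)"
  by (induction n) (auto simp: sum.cl_ivl_Suc)

lemma tele2: "(\<Sum>k=1..(n::nat). f (k + 1) - f k) = f (n + 1) - (f 1 :: real)"
  by (induction n) (auto simp: sum.cl_ivl_Suc)

lemma part_remove:
  assumes "is_partition a b (L @ p # q # r # M)"
  shows "is_partition a b (L @ p # r # M)"
  using assms unfolding is_partition_def
  by (cases L) (auto simp: sorted_wrt_append)

lemma part_remove_ord:
  assumes "is_partition a b (L @ p # q # r # M)"
  shows "a \<le> p" "p \<le> q" "q \<le> r" "r \<le> b"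
proof -
  have s: "sorted_wrt (<) (L @ p # q # r # M)" using assms unfolding is_partition_def by auto
  then show "p \<le> q" "q \<le> r" by (auto simp: sorted_wrt_append)
  show "a \<le> p" "r \<le> b" using part_set[OF assms] by auto
qed

lemma rsum_remove: "rsum F (L @ p # q # r # M) = rsum F (L @ p # r # M) + (F p q + F q r - F p r)"
  using rsum_append[of F L p "q # r # M"] rsum_append[of F L p "r # M"] by simp

lemma split3:
  assumes "i + 2 < length P"
  shows "P = take i P @ P ! i # P ! (i+1) # P ! (i+2) # drop (i+3) P"
proof -
  have "drop i P = P ! i # P ! (i+1) # P ! (i+2) # drop (i+3) P"
    using assms Cons_nth_drop_Suc[of i P] Cons_nth_drop_Suc[of "Suc i" P] Cons_nth_drop_Suc[of "Suc (Suc i)" P]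
    by (simp add: numeral_3_eq_3)
  then show ?thesis by (metis append_take_drop_id)
qed

lemma part_nth:
  assumes "is_partition a b P" "i < length P"
  shows "a \<le> P ! i" "P ! i \<le> b"
  using part_set[OF assms(1) nth_mem[OF assms(2)]] by auto

lemma part_hd_last:
  assumes "is_partition a b P"
  shows "P ! 0 = a" "P ! (length P - 1) = b" "P \<noteq> []"
  using assms unfolding is_partition_def by (auto simp: hd_conv_nth last_conv_nth)

lemma exists_short:
  assumes P: "is_partition a b P" and m: "length P = m + 1" "m \<ge> 2"
  shows "\<exists>k. 1 \<le> k \<and> k \<le> m - 1 \<and> P ! (k+1) - P ! (k-1) \<le> 2 * (b - a) / (m - 1)"
proof (rule ccontr)
  assume "\<not> ?thesis"
  then have h: "\<And>k. k \<in> {1..m-1} \<Longrightarrow> 2 * (b - a) / (m - 1) < P ! (k+1) - P ! (k-1)"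
    by force
  have "(\<Sum>k=1..m-1. 2 * (b - a) / (m - 1)) < (\<Sum>k=1..m-1. P ! (k+1) - P ! (k-1))"
    using m by (intro sum_strict_mono h) auto
  also have "\<dots> = (\<Sum>k=1..m-1. P ! (k+1) - P ! k) + (\<Sum>k=1..m-1. P ! k - P ! (k-1))"
    by (simp add: sum.distrib[symmetric])
  also have "\<dots> = (P ! m - P ! 1) + (P ! (m-1) - P ! 0)"
    using tele1[of "\<lambda>k. P ! k" "m-1"] tele2[of "\<lambda>k. P ! k" "m-1"] m by simp
  also have "\<dots> \<le> 2 * (b - a)"
  proof -
    have "m - 1 < length P" "1 < length P" "m < length P" using m by auto
    then show ?thesis
      using part_nth[OF P, of m] part_nth[OF P, of 1] part_nth[OF P, of "m-1"] part_hd_last[OF P] m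
      by auto
  qed
  finally show False using m by simp
qed

lemma sewing:
  assumes c: "c \<ge> 0" and th: "\<theta> \<ge> 0"
    and D: "\<And>s u t. a \<le> s \<Longrightarrow> s \<le> u \<Longrightarrow> u \<le> t \<Longrightarrow> t \<le> b \<Longrightarrow>
              \<bar>\<Xi> s t - \<Xi> s u - \<Xi> u t\<bar> \<le> c * (t - s) powr \<theta>"
    and P: "is_partition a b P"
  shows "\<bar>rsum \<Xi> P - \<Xi> a b\<bar> \<le> c * (b - a) powr \<theta> * Zs \<theta> (length P - 2)"
  using P
proof (induction "length P" arbitrary: P rule: less_induct)
  case less
  note P = less.prems
  have ab: "a \<le> b" using part_le[OF P] .
  obtain m where m: "length P = m + 1" using part_hd_last(3)[OF P]
    by (metis Suc_eq_plus1 length_greater_0_conv less_imp_Suc_add plus_1_eq_Suc)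
  show ?case
  proof (cases "m \<le> 1")
    case True
    show ?thesis
    proof (cases "m = 0")
      case True
      then obtain x where "P = [x]" using m by (cases P) auto
      then have "a = b" "P = [a]" using P by (auto simp: part_single)
      moreover have "\<bar>\<Xi> a a - \<Xi> a a - \<Xi> a a\<bar> \<le> c * (a - a) powr \<theta>" using D[of a a a] \<open>a = b\<close> by simp
      ultimately show ?thesis by simp
    next
      case False
      then have "m = 1" using True by simp
      then obtain x y where "P = [x, y]" using m
        by (cases P; cases "tl P") auto
      then have "P = [a, b]" using P unfolding is_partition_def by auto
      then show ?thesis by (simp add: Zs_def)
    qed
  next
    case False
    then have m2: "m \<ge> 2" by simp
    obtain k where k: "1 \<le> k" "k \<le> m - 1" "P ! (k+1) - P ! (k-1) \<le> 2 * (b - a) / (m - 1)"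
      using exists_short[OF P m m2] by blast
    define L where "L = take (k-1) P"
    define M where "M = drop (k-1+3) P"
    define p where "p = P ! (k-1)"
    define q where "q = P ! (k-1+1)"
    define r where "r = P ! (k-1+2)"
    have Pe: "P = L @ p # q # r # M"
      unfolding L_def M_def p_def q_def r_def using split3[of "k-1" P] k m by simp
    have rp: "r - p \<le> 2 * (b - a) / (m - 1)" using k unfolding r_def p_def by simp
    define P' where "P' = L @ p # r # M"
    have P': "is_partition a b P'" unfolding P'_def using part_remove P Pe by metis
    have lP': "length P' = m" using Pe m unfolding P'_def by simp
    have IH: "\<bar>rsum \<Xi> P' - \<Xi> a b\<bar> \<le> c * (b - a) powr \<theta> * Zs \<theta> (length P' - 2)"
      using less.hyps[OF _ P'] lP' m by simp
    have ord: "a \<le> p" "p \<le> q" "q \<le> r" "r \<le> b" using part_remove_ord P Pe by metis+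
    have d: "\<bar>\<Xi> p r - \<Xi> p q - \<Xi> q r\<bar> \<le> c * (r - p) powr \<theta>" using D ord by blast
    have "(r - p) powr \<theta> \<le> (2 * (b - a) / (m - 1)) powr \<theta>"
      using rp ord th by (intro powr_mono2) auto
    also have "\<dots> = ((b - a) * (2 / real (m - 1))) powr \<theta>"
      using m2 by (simp add: of_nat_diff algebra_simps)
    also have "\<dots> = (b - a) powr \<theta> * (2 / real (m - 1)) powr \<theta>"
      using ab m2 by (intro powr_mult; auto)
    finally have rp2: "(r - p) powr \<theta> \<le> (b - a) powr \<theta> * (2 / real (m - 1)) powr \<theta>" .
    have "rsum \<Xi> P = rsum \<Xi> P' + (\<Xi> p q + \<Xi> q r - \<Xi> p r)"
      unfolding P'_def Pe by (rule rsum_remove)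
    then have "\<bar>rsum \<Xi> P - \<Xi> a b\<bar> \<le> \<bar>rsum \<Xi> P' - \<Xi> a b\<bar> + \<bar>\<Xi> p r - \<Xi> p q - \<Xi> q r\<bar>"
      by linarith
    also have "\<dots> \<le> c * (b - a) powr \<theta> * Zs \<theta> (m - 2) + c * ((b - a) powr \<theta> * (2 / real (m - 1)) powr \<theta>)"
      using IH lP' d rp2 c by (smt (verit) mult_left_mono)
    also have "\<dots> = c * (b - a) powr \<theta> * Zs \<theta> (m - 1)"
    proof -
      obtain n where n: "m = n + 2" using m2 by (metis add.commute le_Suc_ex)
      have "Zs \<theta> (m - 1) = Zs \<theta> (m - 2) + (2 / real (m - 1)) powr \<theta>"
        using Zs_Suc[of \<theta> n] unfolding n by (simp add: numeral_2_eq_2)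
      then show ?thesis by (simp add: algebra_simps)
    qed
    finally show ?thesis using m by simp
  qed
qed

definition Zinf :: "real \<Rightarrow> real" where
  "Zinf \<theta> = (\<Sum>n. (2 / (real n + 1)) powr \<theta>)"

lemma Zinf_summable:
  assumes "\<theta> > 1" shows "summable (\<lambda>n. (2 / (real n + 1)) powr \<theta>)"
proof -
  have "summable (\<lambda>n. real n powr (-\<theta>))" using summable_real_powr_iff assms by simp
  then have "summable (\<lambda>n. real (Suc n) powr (-\<theta>))" by (subst summable_Suc_iff)
  then have "summable (\<lambda>n. 2 powr \<theta> * real (Suc n) powr (-\<theta>))" by (rule summable_mult)
  moreover have "(2 / (real n + 1)) powr \<theta> = 2 powr \<theta> * real (Suc n) powr (-\<theta>)" for n
    by (subst powr_divide) (auto simp: powr_minus divide_inverse add.commute)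
  ultimately show ?thesis by simp
qed

lemma Zs_le_Zinf:
  assumes "\<theta> > 1" shows "Zs \<theta> n \<le> Zinf \<theta>"
proof -
  have "Zs \<theta> n = (\<Sum>i<n. (2 / (real i + 1)) powr \<theta>)"
    unfolding Zs_def
  proof (induction n)
    case (Suc n) then show ?case by (simp add: sum.cl_ivl_Suc add.commute)
  qed simp
  also have "\<dots> \<le> Zinf \<theta>" unfolding Zinf_def
    by (rule sum_le_suminf[OF Zinf_summable[OF assms]]) auto
  finally show ?thesis .
qed

lemma Zinf_nonneg: "\<theta> > 1 \<Longrightarrow> Zinf \<theta> \<ge> 0"
  using Zs_le_Zinf[of \<theta> 0] by (simp add: Zs_def)

fun finep :: "real \<Rightarrow> real list \<Rightarrow> bool" where
  "finep h (x # y # zs) = (y - x \<le> h \<and> finep h (y # zs))"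
| "finep h _ = True"

lemma finep_idx: "finep h P \<longleftrightarrow> (\<forall>k < length P - 1. P ! (k+1) - P ! k \<le> h)"
proof (induction h P rule: finep.induct)
  case (1 h x y zs)
  have "(\<forall>k < length (x # y # zs) - 1. (x # y # zs) ! (k+1) - (x # y # zs) ! k \<le> h) \<longleftrightarrow>
        (y - x \<le> h \<and> (\<forall>k < length (y # zs) - 1. (y # zs) ! (k+1) - (y # zs) ! k \<le> h))"
    (is "?L \<longleftrightarrow> ?R")
  proof
    assume L: ?L
    have "y - x \<le> h" using L[rule_format, of 0] by simp
    moreover have "\<forall>k < length (y # zs) - 1. (y # zs) ! (k+1) - (y # zs) ! k \<le> h"
    proof (intro allI impI)
      fix k assume "k < length (y # zs) - 1"
      then show "(y # zs) ! (k+1) - (y # zs) ! k \<le> h" using L[rule_format, of "Suc k"] by simp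
    qed
    ultimately show ?R by blast
  next
    assume R: ?R
    show ?L
    proof (intro allI impI)
      fix k assume k: "k < length (x # y # zs) - 1"
      show "(x # y # zs) ! (k+1) - (x # y # zs) ! k \<le> h"
      proof (cases k)
        case 0 then show ?thesis using R by simp
      next
        case (Suc j) then show ?thesis using R k by auto
      qed
    qed
  qed
  then show ?case using 1 by simp
qed auto

lemma mesh_fine: "h \<ge> 0 \<Longrightarrow> mesh P \<le> h \<longleftrightarrow> finep h P"
  unfolding mesh_def finep_idx by (auto simp: Max_le_iff)

lemma mesh_nonneg: "mesh P \<ge> 0"
  unfolding mesh_def by (rule Max_ge) auto

lemma finep_mesh: "finep (mesh P) P"
  using mesh_fine[of "mesh P" P] mesh_nonneg[of P] by simp

lemma finep_append: "finep h (T @ y # M) \<longleftrightarrow> finep h (T @ [y]) \<and> finep h (y # M)"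
proof (induction T)
  case (Cons a T) then show ?case by (cases T) auto
qed simp

lemma sw_hd: "sorted_wrt (<) R \<Longrightarrow> x \<in> set R \<Longrightarrow> hd R \<le> (x::real)"
  by (cases R) auto

lemma sw_last: "sorted_wrt (<) R \<Longrightarrow> x \<in> set R \<Longrightarrow> x \<le> last (R :: real list)"
proof (induction R)
  case (Cons a R)
  show ?case
  proof (cases "R = []")
    case True then show ?thesis using Cons by simp
  next
    case False
    then have lR: "last R \<in> set R" by simp
    show ?thesis
    proof (cases "x = a")
      case True
      have "a < last R" using Cons.prems(1) lR by simp
      then show ?thesis using True False by simp
    next
      case False
      then show ?thesis using Cons \<open>R \<noteq> []\<close> by auto
    qed
  qed
qed simp

lemma part_of_set:
  assumes "sorted_wrt (<) R" "a \<in> set R" "b \<in> set R" "\<And>x. x \<in> set R \<Longrightarrow> a \<le> x \<and> x \<le> b"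
  shows "is_partition a b R"
proof -
  have "R \<noteq> []" using assms by auto
  moreover have "hd R = a" using sw_hd[OF assms(1,2)] assms(4)[of "hd R"] \<open>R \<noteq> []\<close> by force
  moreover have "last R = b" using sw_last[OF assms(1,3)] assms(4)[of "last R"] \<open>R \<noteq> []\<close> by force
  ultimately show ?thesis using assms(1) unfolding is_partition_def by simp
qed

lemma part_concat:
  assumes P1: "is_partition a b P1" and P2: "is_partition b c P2"
  obtains T M where "P1 = T @ [b]" "P2 = b # M" "is_partition a c (T @ b # M)"
proof -
  obtain T where T: "P1 = T @ [b]" using P1 unfolding is_partition_def
    by (metis append_butlast_last_id)
  obtain M where M: "P2 = b # M" using P2 unfolding is_partition_def
    by (metis hd_Cons_tl)
  have s1: "sorted_wrt (<) (T @ [b])" and s2: "sorted_wrt (<) (b # M)"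
    using P1 P2 T M unfolding is_partition_def by auto
  have "sorted_wrt (<) (T @ b # M)"
    using s1 s2 by (auto simp: sorted_wrt_append) (meson order.strict_trans)
  moreover have "hd (T @ b # M) = a" using P1 T unfolding is_partition_def by (cases T) auto
  moreover have "last (T @ b # M) = c" using P2 M unfolding is_partition_def by auto
  ultimately have "is_partition a c (T @ b # M)" unfolding is_partition_def by simp
  then show ?thesis using that T M by blast
qed

lemma rsum_abs_le:
  assumes "is_partition a b P" "\<And>s t. a \<le> s \<Longrightarrow> s \<le> t \<Longrightarrow> t \<le> b \<Longrightarrow> \<bar>F s t\<bar> \<le> G s t"
  shows "\<bar>rsum F P\<bar> \<le> rsum G P"
  using assms
proof (induction F P arbitrary: a rule: rsum.induct)
  case (1 F x y zs)
  have p: "x = a" "x < y" "is_partition y b (y # zs)" "y \<le> b"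
    using part_Cons2[OF "1.prems"(1)] by auto
  have "\<bar>rsum F (y # zs)\<bar> \<le> rsum G (y # zs)"
    using "1.IH"[OF p(3)] "1.prems"(2) p by force
  moreover have "\<bar>F x y\<bar> \<le> G x y" using "1.prems"(2) p by force
  ultimately show ?case by simp
qed auto

lemma gsum_bound:
  assumes "is_partition a b P" "finep h P" "\<theta> \<ge> 1"
  shows "rsum (\<lambda>s t. (t - s) powr \<theta>) P \<le> h powr (\<theta> - 1) * (b - a)"
  using assms
proof (induction "\<lambda>s t. (t - s) powr \<theta>" P arbitrary: a rule: rsum.induct)
  case (1 x y zs)
  have p: "x = a" "x < y" "is_partition y b (y # zs)" "y \<le> b"
    using part_Cons2[OF "1.prems"(1)] by auto
  have f: "y - x \<le> h" "finep h (y # zs)" using "1.prems"(2) by auto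
  have "(y - x) powr \<theta> = (y - x) powr (\<theta> - 1) * (y - x)"
    using p by (simp add: powr_add[symmetric] powr_diff)
  also have "\<dots> \<le> h powr (\<theta> - 1) * (y - x)"
    using p f "1.prems"(3) by (intro mult_right_mono powr_mono2) auto
  finally have "(y - x) powr \<theta> \<le> h powr (\<theta> - 1) * (y - x)" .
  moreover have "rsum (\<lambda>s t. (t - s) powr \<theta>) (y # zs) \<le> h powr (\<theta> - 1) * (b - y)"
    using "1.hyps"[OF p(3) f(2) "1.prems"(3)] .
  ultimately show ?case using p by (simp add: algebra_simps)
next
  case ("2_1" v)
  then show ?case using part_le[OF "2_1.prems"(1)] by simp
next
  case ("2_2" v va)
  then show ?case using part_le[OF "2_2.prems"(1)] by simp
qed

lemma refine:
  assumes c: "c \<ge> 0" and th: "\<theta> \<ge> 0" and K: "\<And>n. Zs \<theta> n \<le> K"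
  shows "is_partition a b P \<Longrightarrow> is_partition a b R \<Longrightarrow> set P \<subseteq> set R \<Longrightarrow>
    (\<And>s u t. a \<le> s \<Longrightarrow> s \<le> u \<Longrightarrow> u \<le> t \<Longrightarrow> t \<le> b \<Longrightarrow>
              \<bar>\<Xi> s t - \<Xi> s u - \<Xi> u t\<bar> \<le> c * (t - s) powr \<theta>) \<Longrightarrow>
    \<bar>rsum \<Xi> R - rsum \<Xi> P\<bar> \<le> c * K * rsum (\<lambda>s t. (t - s) powr \<theta>) P"
proof (induction P arbitrary: a R)
  case Nil then show ?case by (simp add: is_partition_def)
next
  case (Cons p0 P)
  note PR = Cons.prems
  show ?case
  proof (cases P)
    case Nil
    then have "a = b" using PR(1) by (simp add: part_single)
    then have "R = [a]" using PR(2) part_eq by simp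
    then show ?thesis using Nil by simp
  next
    case (Cons p1 P')
    have pp: "p0 = a" "p0 < p1" "is_partition p1 b (p1 # P')" "p1 \<le> b"
      using part_Cons2[of a b p0 p1 P'] PR(1) Cons by auto
    have "p1 \<in> set R" using PR(3) Cons by auto
    then obtain T D' where R: "R = T @ p1 # D'" by (meson split_list)
    have sR: "sorted_wrt (<) (T @ p1 # D')" using PR(2) R unfolding is_partition_def by simp
    then have sT: "\<forall>x\<in>set T. x < p1" and sD: "\<forall>x\<in>set D'. p1 < x"
      and sT': "sorted_wrt (<) (T @ [p1])" and sD': "sorted_wrt (<) (p1 # D')"
      by (auto simp: sorted_wrt_append)
    have "T \<noteq> []"
    proof
      assume "T = []"
      then have "hd R = p1" using R by simp
      then show False using PR(2) pp unfolding is_partition_def by simp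
    qed
    then have hT: "hd (T @ [p1]) = a" using PR(2) R pp unfolding is_partition_def by simp
    have part1: "is_partition a p1 (T @ [p1])" using hT sT' unfolding is_partition_def by simp
    have part2: "is_partition p1 b (p1 # D')" using sD' PR(2) R unfolding is_partition_def by simp
    have sub: "set (p1 # P') \<subseteq> set (p1 # D')"
    proof
      fix z assume z: "z \<in> set (p1 # P')"
      show "z \<in> set (p1 # D')"
      proof (cases "z = p1")
        case False
        then have "z \<in> set P'" using z by simp
        then have "p1 < z" using pp(3) unfolding is_partition_def by simp
        moreover have "z \<in> set R" using PR(3) Cons \<open>z \<in> set P'\<close> by auto
        ultimately show ?thesis using R sT by auto
      qed simp
    qed
    have IH: "\<bar>rsum \<Xi> (p1 # D') - rsum \<Xi> (p1 # P')\<bar> \<le> c * K * rsum (\<lambda>s t. (t - s) powr \<theta>) (p1 # P')"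
    proof -
      have D2: "\<bar>\<Xi> s t - \<Xi> s u - \<Xi> u t\<bar> \<le> c * (t - s) powr \<theta>"
        if "p1 \<le> s" "s \<le> u" "u \<le> t" "t \<le> b" for s u t
        by (rule PR(4)) (use that pp in auto)
      show ?thesis using Cons.IH[OF _ part2 _ D2] pp(3) sub Cons by simp
    qed
    have sew: "\<bar>rsum \<Xi> (T @ [p1]) - \<Xi> a p1\<bar> \<le> c * (p1 - a) powr \<theta> * Zs \<theta> (length (T @ [p1]) - 2)"
    proof -
      have D1: "\<bar>\<Xi> s t - \<Xi> s u - \<Xi> u t\<bar> \<le> c * (t - s) powr \<theta>"
        if "a \<le> s" "s \<le> u" "u \<le> t" "t \<le> p1" for s u t
        by (rule PR(4)) (use that pp in auto)
      show ?thesis by (rule sewing[OF c th D1 part1])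
    qed
    also have "\<dots> \<le> c * (p1 - a) powr \<theta> * K"
      using K c by (intro mult_left_mono) auto
    finally have sew': "\<bar>rsum \<Xi> (T @ [p1]) - \<Xi> a p1\<bar> \<le> c * K * (p1 - a) powr \<theta>" by (simp add: algebra_simps)
    have "rsum \<Xi> R = rsum \<Xi> (T @ [p1]) + rsum \<Xi> (p1 # D')" unfolding R by (rule rsum_append)
    moreover have "rsum \<Xi> (p0 # P) = \<Xi> a p1 + rsum \<Xi> (p1 # P')" using Cons pp by simp
    moreover have "rsum (\<lambda>s t. (t - s) powr \<theta>) (p0 # P) = (p1 - a) powr \<theta> + rsum (\<lambda>s t. (t - s) powr \<theta>) (p1 # P')"
      using Cons pp by simp
    ultimately show ?thesis using IH sew' by (simp add: distrib_left abs_le_iff)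
  qed
qed

definition rlim :: "real \<Rightarrow> real \<Rightarrow> (real \<Rightarrow> real \<Rightarrow> real) \<Rightarrow> real \<Rightarrow> bool" where
  "rlim a b \<Xi> L \<longleftrightarrow> (\<forall>\<epsilon>>0. \<exists>\<delta>>0. \<forall>P. is_partition a b P \<and> mesh P < \<delta> \<longrightarrow> \<bar>rsum \<Xi> P - L\<bar> < \<epsilon>)"

definition unif :: "real \<Rightarrow> real \<Rightarrow> nat \<Rightarrow> real list" where
  "unif a b n = map (\<lambda>k. a + (b - a) * real k / real n) [0..<n+1]"

lemma unif_part:
  assumes "a < b" "n > 0"
  shows "is_partition a b (unif a b n)" "mesh (unif a b n) \<le> (b - a) / n"
proof -
  have "sorted_wrt (<) (unif a b n)"
    unfolding unif_def sorted_wrt_map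
    by (rule sorted_wrt_mono_rel[OF _ sorted_wrt_upt]) (use assms in \<open>auto simp: divide_strict_right_mono\<close>)
  moreover have "hd (unif a b n) = a" unfolding unif_def by (simp add: hd_map upt_conv_Cons)
  moreover have "last (unif a b n) = b" unfolding unif_def using assms by (simp add: last_map)
  ultimately show "is_partition a b (unif a b n)" unfolding is_partition_def unif_def by simp
  have u: "unif a b n ! k = a + (b - a) * real k / real n" if "k \<le> n" for k
    unfolding unif_def using that by (simp del: upt_Suc add: nth_map)
  have "finep ((b - a) / n) (unif a b n)"
    unfolding finep_idx
  proof (intro allI impI)
    fix k assume "k < length (unif a b n) - 1"
    then have "k < n" unfolding unif_def by simp
    then show "unif a b n ! (k + 1) - unif a b n ! k \<le> (b - a) / real n"
      using u[of k] u[of "k+1"] by (simp add: field_simps)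
  qed
  then show "mesh (unif a b n) \<le> (b - a) / n"
    using mesh_fine[of "(b - a) / n"] assms by simp
qed

lemma exists_part:
  assumes "a \<le> b" "\<delta> > 0"
  shows "\<exists>P. is_partition a b P \<and> mesh P < \<delta>"
proof (cases "a = b")
  case True
  have "mesh [a] = 0" by (simp add: mesh_def)
  then show ?thesis using True assms by (intro exI[of _ "[a]"]) (simp add: part_single)
next
  case False
  then have ab: "a < b" using assms by simp
  obtain n :: nat where n: "(b - a) / \<delta> < n" using reals_Archimedean2 by blast
  then have n0: "n > 0" using ab assms
    by (metis divide_pos_pos gr0I less_eq_real_def of_nat_0 order_less_asym diff_gt_0_iff_gt)
  have "(b - a) / n < \<delta>" using n n0 assms by (simp add: field_simps)
  then show ?thesis using unif_part[OF ab n0] by (intro exI[of _ "unif a b n"]) auto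
qed

lemma rlim_unique:
  assumes "a \<le> b" "rlim a b \<Xi> L1" "rlim a b \<Xi> L2"
  shows "L1 = L2"
proof (rule ccontr)
  assume ne: "L1 \<noteq> L2"
  define e where "e = \<bar>L1 - L2\<bar> / 2"
  have e: "e > 0" using ne unfolding e_def by simp
  obtain d1 where d1: "d1 > 0" "\<forall>P. is_partition a b P \<and> mesh P < d1 \<longrightarrow> \<bar>rsum \<Xi> P - L1\<bar> < e"
    using assms(2) e unfolding rlim_def by blast
  obtain d2 where d2: "d2 > 0" "\<forall>P. is_partition a b P \<and> mesh P < d2 \<longrightarrow> \<bar>rsum \<Xi> P - L2\<bar> < e"
    using assms(3) e unfolding rlim_def by blast
  obtain P where P: "is_partition a b P" "mesh P < min d1 d2" using exists_part[OF assms(1)] d1 d2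
    by (metis min_less_iff_conj)
  have "\<bar>rsum \<Xi> P - L1\<bar> < e" "\<bar>rsum \<Xi> P - L2\<bar> < e" using d1 d2 P by auto
  then show False unfolding e_def by (auto simp: abs_if split: if_splits)
qed

lemma rlim_the: "a \<le> b \<Longrightarrow> rlim a b \<Xi> L \<Longrightarrow> (THE L. rlim a b \<Xi> L) = L"
  using rlim_unique by blast

lemma rlim_exists:
  assumes ab: "a < b"
    and C: "\<And>\<epsilon>. \<epsilon> > 0 \<Longrightarrow> \<exists>\<delta>>0. \<forall>P Q. is_partition a b P \<and> mesh P < \<delta> \<and> is_partition a b Q \<and> mesh Q < \<delta>
               \<longrightarrow> \<bar>rsum \<Xi> P - rsum \<Xi> Q\<bar> < \<epsilon>"
  shows "\<exists>L. rlim a b \<Xi> L"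
proof -
  define F where "F n = rsum \<Xi> (unif a b (Suc n))" for n
  have mU: "mesh (unif a b (Suc n)) \<le> (b - a) / Suc n" "is_partition a b (unif a b (Suc n))" for n
    using unif_part[OF ab, of "Suc n"] by auto
  have small: "\<exists>N. \<forall>n\<ge>N. (b - a) / Suc n < \<delta>" if "\<delta> > 0" for \<delta>
  proof -
    obtain N :: nat where N: "(b - a) / \<delta> < N" using reals_Archimedean2 by blast
    have "(b - a) / Suc n < \<delta>" if "n \<ge> N" for n
    proof -
      have "(b - a) / \<delta> < Suc n" using N that by linarith
      then show ?thesis using \<open>\<delta> > 0\<close> by (simp add: field_simps)
    qed
    then show ?thesis by blast
  qed
  have "Cauchy F"
  proof (rule CauchyI)
    fix e :: real assume e: "e > 0"
    obtain d where d: "d > 0" "\<forall>P Q. is_partition a b P \<and> mesh P < d \<and> is_partition a b Q \<and> mesh Q < d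
               \<longrightarrow> \<bar>rsum \<Xi> P - rsum \<Xi> Q\<bar> < e" using C[OF e] by blast
    obtain N where N: "\<forall>n\<ge>N. (b - a) / Suc n < d" using small[OF d(1)] by blast
    show "\<exists>M. \<forall>m\<ge>M. \<forall>n\<ge>M. norm (F m - F n) < e"
    proof (intro exI allI impI)
      fix m n assume "m \<ge> N" "n \<ge> N"
      then have "mesh (unif a b (Suc m)) < d" "mesh (unif a b (Suc n)) < d"
        using N mU by (meson order.strict_trans1)+
      then show "norm (F m - F n) < e" using d mU unfolding F_def by auto
    qed
  qed
  then obtain L where L: "F \<longlonglongrightarrow> L" using Cauchy_convergent_iff convergent_def by blast
  have "rlim a b \<Xi> L" unfolding rlim_def
  proof (intro allI impI)
    fix e :: real assume e: "e > 0"
    obtain d where d: "d > 0" "\<forall>P Q. is_partition a b P \<and> mesh P < d \<and> is_partition a b Q \<and> mesh Q < d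
               \<longrightarrow> \<bar>rsum \<Xi> P - rsum \<Xi> Q\<bar> < e/2" using C[of "e/2"] e by auto
    obtain N1 where N1: "\<forall>n\<ge>N1. (b - a) / Suc n < d" using small[OF d(1)] by blast
    obtain N2 where N2: "\<forall>n\<ge>N2. \<bar>F n - L\<bar> < e/2"
      using L e unfolding LIMSEQ_def dist_real_def by (meson half_gt_zero)
    define n where "n = max N1 N2"
    have mn: "mesh (unif a b (Suc n)) < d" using N1 mU unfolding n_def by (meson max.cobounded1 order.strict_trans1)
    have Fn: "\<bar>F n - L\<bar> < e/2" using N2 unfolding n_def by simp
    show "\<exists>\<delta>>0. \<forall>P. is_partition a b P \<and> mesh P < \<delta> \<longrightarrow> \<bar>rsum \<Xi> P - L\<bar> < e"
    proof (intro exI conjI allI impI)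
      fix P assume P: "is_partition a b P \<and> mesh P < d"
      then have "\<bar>rsum \<Xi> P - F n\<bar> < e/2" using d mn mU unfolding F_def by blast
      then show "\<bar>rsum \<Xi> P - L\<bar> < e" using Fn by (auto simp: abs_if split: if_splits)
    qed (use d in auto)
  qed
  then show ?thesis by blast
qed

lemma merge_part:
  assumes "is_partition a b P" "is_partition a b Q"
  shows "is_partition a b (sorted_list_of_set (set P \<union> set Q))"
    "set P \<subseteq> set (sorted_list_of_set (set P \<union> set Q))"
    "set Q \<subseteq> set (sorted_list_of_set (set P \<union> set Q))"
proof -
  have f: "finite (set P \<union> set Q)" by simp
  have "a \<in> set P" "b \<in> set P" using assms(1) unfolding is_partition_def
    by (auto intro: hd_in_set last_in_set)
  then show "is_partition a b (sorted_list_of_set (set P \<union> set Q))"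
    using part_set[OF assms(1)] part_set[OF assms(2)]
    by (intro part_of_set) (auto simp: f)
  show "set P \<subseteq> set (sorted_list_of_set (set P \<union> set Q))"
       "set Q \<subseteq> set (sorted_list_of_set (set P \<union> set Q))" using f by auto
qed

theorem young:
  assumes th: "\<theta> > 1" and c: "c \<ge> 0" and ab: "a \<le> b"
    and D: "\<And>s u t. a \<le> s \<Longrightarrow> s \<le> u \<Longrightarrow> u \<le> t \<Longrightarrow> t \<le> b \<Longrightarrow>
              \<bar>\<Xi> s t - \<Xi> s u - \<Xi> u t\<bar> \<le> c * (t - s) powr \<theta>"
  shows "\<exists>L. rlim a b \<Xi> L \<and> \<bar>L - \<Xi> a b\<bar> \<le> c * Zinf \<theta> * (b - a) powr \<theta>"
proof -
  define K where "K = Zinf \<theta>"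
  have th0: "\<theta> \<ge> 0" using th by simp
  have K: "\<And>n. Zs \<theta> n \<le> K" "K \<ge> 0" unfolding K_def using Zs_le_Zinf Zinf_nonneg th by auto
  have sew: "\<bar>rsum \<Xi> P - \<Xi> a b\<bar> \<le> c * K * (b - a) powr \<theta>" if P: "is_partition a b P" for P
  proof -
    have "\<bar>rsum \<Xi> P - \<Xi> a b\<bar> \<le> c * (b - a) powr \<theta> * Zs \<theta> (length P - 2)"
      by (rule sewing[OF c th0 D P])
    also have "\<dots> \<le> c * (b - a) powr \<theta> * K" using K c by (intro mult_left_mono) auto
    finally show ?thesis by (simp add: algebra_simps)
  qed
  obtain L where L: "rlim a b \<Xi> L"
  proof (cases "a = b")
    case True
    have "rlim a b \<Xi> 0" unfolding rlim_def
    proof (intro allI impI exI[of _ 1] conjI)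
      fix e :: real and P assume "e > 0" "is_partition a b P \<and> mesh P < 1"
      then have "P = [a]" using True part_eq by auto
      then show "\<bar>rsum \<Xi> P - 0\<bar> < e" using \<open>e > 0\<close> by simp
    qed simp
    then show ?thesis using that by blast
  next
    case False
    then have ab': "a < b" using ab by simp
    have "\<exists>L. rlim a b \<Xi> L"
    proof (rule rlim_exists[OF ab'])
      fix e :: real assume e: "e > 0"
      define A where "A = 2 * c * K * (b - a)"
      have A: "A \<ge> 0" unfolding A_def using c K ab by auto
      define d where "d = (e / (A + 1)) powr (1 / (\<theta> - 1))"
      have d: "d > 0" unfolding d_def using e A by simp
      have dp: "d powr (\<theta> - 1) = e / (A + 1)" unfolding d_def using th e A
        by (simp add: powr_powr)
      show "\<exists>\<delta>>0. \<forall>P Q. is_partition a b P \<and> mesh P < \<delta> \<and> is_partition a b Q \<and> mesh Q < \<delta>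
               \<longrightarrow> \<bar>rsum \<Xi> P - rsum \<Xi> Q\<bar> < e"
      proof (intro exI conjI allI impI)
        fix P Q assume PQ: "is_partition a b P \<and> mesh P < d \<and> is_partition a b Q \<and> mesh Q < d"
        define R where "R = sorted_list_of_set (set P \<union> set Q)"
        have PQ': "is_partition a b P" "is_partition a b Q" using PQ by auto
        have R: "is_partition a b R" "set P \<subseteq> set R" "set Q \<subseteq> set R"
          using merge_part[OF PQ'(1) PQ'(2)] unfolding R_def by blast+
        have "mesh P \<le> d" "mesh Q \<le> d" using PQ by auto
        then have fP: "finep d P" "finep d Q" using mesh_fine[of d P] mesh_fine[of d Q] d by auto
        have "\<bar>rsum \<Xi> R - rsum \<Xi> P\<bar> \<le> c * K * rsum (\<lambda>s t. (t - s) powr \<theta>) P"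
          by (rule refine[OF c th0 K(1) PQ'(1) R(1) R(2) D])
        also have "\<dots> \<le> c * K * (d powr (\<theta> - 1) * (b - a))"
          using gsum_bound[of a b P d \<theta>] PQ fP th c K by (intro mult_left_mono) auto
        finally have 1: "\<bar>rsum \<Xi> R - rsum \<Xi> P\<bar> \<le> c * K * (d powr (\<theta> - 1) * (b - a))" .
        have "\<bar>rsum \<Xi> R - rsum \<Xi> Q\<bar> \<le> c * K * rsum (\<lambda>s t. (t - s) powr \<theta>) Q"
          by (rule refine[OF c th0 K(1) PQ'(2) R(1) R(3) D])
        also have "\<dots> \<le> c * K * (d powr (\<theta> - 1) * (b - a))"
          using gsum_bound[of a b Q d \<theta>] PQ fP th c K by (intro mult_left_mono) auto
        finally have 2: "\<bar>rsum \<Xi> R - rsum \<Xi> Q\<bar> \<le> c * K * (d powr (\<theta> - 1) * (b - a))" .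
        have "\<bar>rsum \<Xi> P - rsum \<Xi> Q\<bar> \<le> \<bar>rsum \<Xi> R - rsum \<Xi> P\<bar> + \<bar>rsum \<Xi> R - rsum \<Xi> Q\<bar>"
          by (auto simp: abs_if)
        also have "\<dots> \<le> 2 * (c * K * (d powr (\<theta> - 1) * (b - a)))" using 1 2 by simp
        also have "\<dots> = A * d powr (\<theta> - 1)" unfolding A_def by (simp add: algebra_simps)
        also have "\<dots> = A * (e / (A + 1))" by (simp add: dp)
        finally have "\<bar>rsum \<Xi> P - rsum \<Xi> Q\<bar> \<le> A * (e / (A + 1))" .
        also have "\<dots> < e" using A e by (simp add: field_simps)
        finally show "\<bar>rsum \<Xi> P - rsum \<Xi> Q\<bar> < e" .
      qed (use d in auto)
    qed
    then show ?thesis using that by blast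
  qed
  have "\<bar>L - \<Xi> a b\<bar> \<le> c * K * (b - a) powr \<theta>"
  proof (rule ccontr)
    assume "\<not> ?thesis"
    then have e: "\<bar>L - \<Xi> a b\<bar> - c * K * (b - a) powr \<theta> > 0" by simp
    obtain d where d: "d > 0" "\<forall>P. is_partition a b P \<and> mesh P < d \<longrightarrow>
        \<bar>rsum \<Xi> P - L\<bar> < \<bar>L - \<Xi> a b\<bar> - c * K * (b - a) powr \<theta>"
      using L e unfolding rlim_def by blast
    obtain P where P: "is_partition a b P" "mesh P < d" using exists_part[OF ab d(1)] by blast
    have "\<bar>rsum \<Xi> P - L\<bar> < \<bar>L - \<Xi> a b\<bar> - c * K * (b - a) powr \<theta>" using d(2) P by blast
    then show False using sew[OF P(1)] by (auto simp: abs_if split: if_splits)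
  qed
  then show ?thesis using L unfolding K_def by blast
qed

lemma rlim_add: "rlim a b F L1 \<Longrightarrow> rlim a b G L2 \<Longrightarrow> rlim a b (\<lambda>s t. F s t + G s t) (L1 + L2)"
  unfolding rlim_def rsum_add
proof (intro allI impI)
  fix e :: real assume H: "\<forall>\<epsilon>>0. \<exists>\<delta>>0. \<forall>P. is_partition a b P \<and> mesh P < \<delta> \<longrightarrow> \<bar>rsum F P - L1\<bar> < \<epsilon>"
    "\<forall>\<epsilon>>0. \<exists>\<delta>>0. \<forall>P. is_partition a b P \<and> mesh P < \<delta> \<longrightarrow> \<bar>rsum G P - L2\<bar> < \<epsilon>" and e: "e > 0"
  obtain d1 where d1: "d1 > 0" "\<forall>P. is_partition a b P \<and> mesh P < d1 \<longrightarrow> \<bar>rsum F P - L1\<bar> < e/2"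
    using H(1) e by (meson half_gt_zero)
  obtain d2 where d2: "d2 > 0" "\<forall>P. is_partition a b P \<and> mesh P < d2 \<longrightarrow> \<bar>rsum G P - L2\<bar> < e/2"
    using H(2) e by (meson half_gt_zero)
  show "\<exists>\<delta>>0. \<forall>P. is_partition a b P \<and> mesh P < \<delta> \<longrightarrow> \<bar>rsum F P + rsum G P - (L1 + L2)\<bar> < e"
  proof (intro exI[of _ "min d1 d2"] conjI allI impI)
    fix P assume "is_partition a b P \<and> mesh P < min d1 d2"
    then have "\<bar>rsum F P - L1\<bar> < e/2" "\<bar>rsum G P - L2\<bar> < e/2" using d1 d2 by auto
    then show "\<bar>rsum F P + rsum G P - (L1 + L2)\<bar> < e" by (auto simp: abs_if split: if_splits)
  qed (use d1 d2 in auto)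
qed

lemma rlim_cmul: "rlim a b F L \<Longrightarrow> rlim a b (\<lambda>s t. k * F s t) (k * L)"
  unfolding rlim_def rsum_cmul
proof (intro allI impI)
  fix e :: real assume H: "\<forall>\<epsilon>>0. \<exists>\<delta>>0. \<forall>P. is_partition a b P \<and> mesh P < \<delta> \<longrightarrow> \<bar>rsum F P - L\<bar> < \<epsilon>"
    and e: "e > 0"
  have e': "e / (\<bar>k\<bar> + 1) > 0" using e by simp
  obtain d where d: "d > 0" "\<forall>P. is_partition a b P \<and> mesh P < d \<longrightarrow> \<bar>rsum F P - L\<bar> < e / (\<bar>k\<bar> + 1)"
    using H e' by blast
  show "\<exists>\<delta>>0. \<forall>P. is_partition a b P \<and> mesh P < \<delta> \<longrightarrow> \<bar>k * rsum F P - k * L\<bar> < e"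
  proof (intro exI[of _ d] conjI allI impI)
    fix P assume "is_partition a b P \<and> mesh P < d"
    then have h: "\<bar>rsum F P - L\<bar> < e / (\<bar>k\<bar> + 1)" using d by auto
    have "\<bar>k * rsum F P - k * L\<bar> = \<bar>k\<bar> * \<bar>rsum F P - L\<bar>" by (simp add: abs_mult[symmetric] algebra_simps)
    also have "\<dots> \<le> \<bar>k\<bar> * (e / (\<bar>k\<bar> + 1))" using h by (intro mult_left_mono) auto
    also have "\<dots> < e" using e by (simp add: field_simps)
    finally show "\<bar>k * rsum F P - k * L\<bar> < e" .
  qed (use d in auto)
qed

lemma rlim_diff: "rlim a b F L1 \<Longrightarrow> rlim a b G L2 \<Longrightarrow> rlim a b (\<lambda>s t. F s t - G s t) (L1 - L2)"
  using rlim_add[of a b F L1 "\<lambda>s t. (-1) * G s t" "(-1) * L2"] rlim_cmul[of a b G L2 "-1"] by simp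

lemma rlim_tele: "rlim a b (\<lambda>s t. f t - f s) (f b - f a)"
  unfolding rlim_def
proof (intro allI impI exI[of _ 1] conjI)
  fix e :: real and P assume "e > 0" "is_partition a b P \<and> mesh P < 1"
  then show "\<bar>rsum (\<lambda>s t. f t - f s) P - (f b - f a)\<bar> < e"
    using rsum_tele[of P f] unfolding is_partition_def by auto
qed simp

lemma rlim_small:
  assumes th: "\<theta> > 1" and c: "c \<ge> 0"
    and B: "\<And>s t. a \<le> s \<Longrightarrow> s \<le> t \<Longrightarrow> t \<le> b \<Longrightarrow> \<bar>\<Xi> s t\<bar> \<le> c * (t - s) powr \<theta>"
  shows "rlim a b \<Xi> 0"
  unfolding rlim_def
proof (intro allI impI)
  fix e :: real assume e: "e > 0"
  define A where "A = c * \<bar>b - a\<bar>"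
  have A: "A \<ge> 0" unfolding A_def using c by auto
  define d where "d = (e / (A + 1)) powr (1 / (\<theta> - 1))"
  have d: "d > 0" unfolding d_def using e A by simp
  have dp: "d powr (\<theta> - 1) = e / (A + 1)" unfolding d_def using th e A
    by (simp add: powr_powr)
  show "\<exists>\<delta>>0. \<forall>P. is_partition a b P \<and> mesh P < \<delta> \<longrightarrow> \<bar>rsum \<Xi> P - 0\<bar> < e"
  proof (intro exI[of _ d] conjI allI impI)
    fix P assume P: "is_partition a b P \<and> mesh P < d"
    have ab: "a \<le> b" using P part_le[of a b P] by simp
    have "mesh P \<le> d" using P by auto
    then have fP: "finep d P" using mesh_fine[of d P] d by auto
    have "\<bar>rsum \<Xi> P\<bar> \<le> rsum (\<lambda>s t. c * (t - s) powr \<theta>) P"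
    proof (rule rsum_abs_le[of a b P])
      show "is_partition a b P" using P by simp
    qed (use B in simp)
    also have "\<dots> = c * rsum (\<lambda>s t. (t - s) powr \<theta>) P" by (rule rsum_cmul)
    also have "\<dots> \<le> c * (d powr (\<theta> - 1) * (b - a))"
      using gsum_bound[of a b P d \<theta>] P fP th c by (intro mult_left_mono) auto
    also have "\<dots> = A * d powr (\<theta> - 1)" using ab unfolding A_def by (simp add: algebra_simps)
    also have "\<dots> = A * (e / (A + 1))" by (simp add: dp)
    also have "\<dots> < e" using A e by (simp add: field_simps)
    finally show "\<bar>rsum \<Xi> P - 0\<bar> < e" by simp
  qed (use d in auto)
qed

lemma rlim_concat:
  assumes "a \<le> b" "b \<le> c" "rlim a c \<Xi> L" "rlim a b \<Xi> L1" "rlim b c \<Xi> L2"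
  shows "L = L1 + L2"
proof (rule ccontr)
  assume ne: "L \<noteq> L1 + L2"
  define e where "e = \<bar>L - (L1 + L2)\<bar> / 3"
  have e: "e > 0" using ne unfolding e_def by simp
  obtain d where d: "d > 0" "\<forall>P. is_partition a c P \<and> mesh P < d \<longrightarrow> \<bar>rsum \<Xi> P - L\<bar> < e"
    using assms(3) e unfolding rlim_def by blast
  obtain d1 where d1: "d1 > 0" "\<forall>P. is_partition a b P \<and> mesh P < d1 \<longrightarrow> \<bar>rsum \<Xi> P - L1\<bar> < e"
    using assms(4) e unfolding rlim_def by blast
  obtain d2 where d2: "d2 > 0" "\<forall>P. is_partition b c P \<and> mesh P < d2 \<longrightarrow> \<bar>rsum \<Xi> P - L2\<bar> < e"
    using assms(5) e unfolding rlim_def by blast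
  define m where "m = min d (min d1 d2)"
  have m: "m > 0" "m \<le> d" "m \<le> d1" "m \<le> d2" using d d1 d2 unfolding m_def by auto
  obtain P1 where P1: "is_partition a b P1" "mesh P1 < m" using exists_part[OF assms(1) m(1)] by blast
  obtain P2 where P2: "is_partition b c P2" "mesh P2 < m" using exists_part[OF assms(2) m(1)] by blast
  obtain T M where TM: "P1 = T @ [b]" "P2 = b # M" "is_partition a c (T @ b # M)"
    using part_concat[OF P1(1) P2(1)] by blast
  define h where "h = max (mesh P1) (mesh P2)"
  have h: "h \<ge> 0" "h < m" "mesh P1 \<le> h" "mesh P2 \<le> h" unfolding h_def
    using P1(2) P2(2) mesh_nonneg[of P1] by auto
  have "finep h P1" "finep h P2" using mesh_fine[OF h(1), of P1] mesh_fine[OF h(1), of P2] h by auto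
  then have "finep h (T @ b # M)" using finep_append[of h T b M] TM by simp
  then have "mesh (T @ b # M) \<le> h" using mesh_fine[OF h(1), of "T @ b # M"] by simp
  then have "mesh (T @ b # M) < d" using h m by simp
  then have "\<bar>rsum \<Xi> (T @ b # M) - L\<bar> < e" using d(2) TM(3) by blast
  moreover have "rsum \<Xi> (T @ b # M) = rsum \<Xi> P1 + rsum \<Xi> P2" unfolding TM by (rule rsum_append)
  moreover have "\<bar>rsum \<Xi> P1 - L1\<bar> < e" using d1(2) P1 m by simp
  moreover have "\<bar>rsum \<Xi> P2 - L2\<bar> < e" using d2(2) P2 m by simp
  ultimately show False unfolding e_def by (auto simp: abs_if split: if_splits)
qed

definition pathhold :: "real \<Rightarrow> real \<Rightarrow> (real \<Rightarrow> 'v::real_normed_vector) \<Rightarrow> bool" where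
  "pathhold H \<rho> x \<longleftrightarrow> (\<forall>s s'. s \<in> {0..1} \<longrightarrow> s' \<in> {0..1} \<longrightarrow> norm (x s - x s') \<le> H * \<bar>s - s'\<bar> powr \<rho>)"

lemma pathholdD: "pathhold H \<rho> x \<Longrightarrow> 0 \<le> s \<Longrightarrow> s \<le> 1 \<Longrightarrow> 0 \<le> s' \<Longrightarrow> s' \<le> 1 \<Longrightarrow>
   norm (x s - x s') \<le> H * \<bar>s - s'\<bar> powr \<rho>"
  unfolding pathhold_def by auto

definition Xi :: "(real \<Rightarrow> 'v::real_inner) \<Rightarrow> real \<Rightarrow> 'v \<Rightarrow> 'v \<Rightarrow> real \<Rightarrow> real \<Rightarrow> real" where
  "Xi x a u w s t = ((x s - x a) \<bullet> u) * ((x t - x s) \<bullet> w)"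

lemma rs_eq: "is_partition a b P \<Longrightarrow> rs_sum2 x P u w = rsum (Xi x a u w) P"
proof -
  assume "is_partition a b P"
  then have "P ! 0 = a" using part_hd_last(1) by blast
  then show ?thesis by (simp add: rs_sum2_def rsum_idx Xi_def)
qed

lemma S2_eq: "S2 x a b u w = (THE L. rlim a b (Xi x a u w) L)"
proof -
  have "(\<forall>\<epsilon>>0. \<exists>\<delta>>0. \<forall>P. is_partition a b P \<and> mesh P < \<delta> \<longrightarrow> \<bar>rs_sum2 x P u w - L\<bar> < \<epsilon>)
        \<longleftrightarrow> rlim a b (Xi x a u w) L" for L
  proof -
    have e: "\<And>P. is_partition a b P \<Longrightarrow> rs_sum2 x P u w = rsum (Xi x a u w) P" by (rule rs_eq)
    show ?thesis unfolding rlim_def by (simp add: e)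
  qed
  then show ?thesis unfolding S2_def by simp
qed

lemma Xi_delta: "Xi x a u w s t - Xi x a u w s r - Xi x a u w r t = - (((x r - x s) \<bullet> u) * ((x t - x r) \<bullet> w))"
  unfolding Xi_def by (simp add: inner_diff_left algebra_simps)

lemma inner_bound: "\<bar>v \<bullet> u\<bar> \<le> norm v * norm (u::'v::real_inner)"
  by (rule Cauchy_Schwarz_ineq2)

lemma incr_bound:
  assumes hx: "pathhold H \<rho> x" and H: "H \<ge> 0" and r: "\<rho> \<ge> 0"
    and st: "0 \<le> s" "s \<le> p" "p \<le> q" "q \<le> t" "t \<le> 1"
  shows "\<bar>(x q - x p) \<bullet> u\<bar> \<le> H * (t - s) powr \<rho> * norm u"
proof -
  have "\<bar>(x q - x p) \<bullet> u\<bar> \<le> norm (x q - x p) * norm u" by (rule inner_bound)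
  also have "\<dots> \<le> H * \<bar>q - p\<bar> powr \<rho> * norm u"
    using pathholdD[OF hx, of q p] st by (intro mult_right_mono) auto
  also have "\<dots> \<le> H * (t - s) powr \<rho> * norm u"
    using st H r by (intro mult_right_mono mult_left_mono powr_mono2) auto
  finally show ?thesis .
qed

lemma prod_bound2:
  assumes hx: "pathhold H \<rho> x" and H: "H \<ge> 0" and r: "\<rho> \<ge> 0"
    and st: "0 \<le> s" "s \<le> p" "p \<le> q" "q \<le> t" "t \<le> 1" "s \<le> p'" "p' \<le> q'" "q' \<le> t"
  shows "\<bar>((x q - x p) \<bullet> u) * ((x q' - x p') \<bullet> w)\<bar> \<le> norm u * norm w * H\<^sup>2 * (t - s) powr (2 * \<rho>)"
proof -
  have 1: "\<bar>(x q - x p) \<bullet> u\<bar> \<le> H * (t - s) powr \<rho> * norm u"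
    using incr_bound[OF hx H r] st by auto
  have 2: "\<bar>(x q' - x p') \<bullet> w\<bar> \<le> H * (t - s) powr \<rho> * norm w"
    using incr_bound[OF hx H r] st by auto
  have "\<bar>((x q - x p) \<bullet> u) * ((x q' - x p') \<bullet> w)\<bar> \<le> (H * (t - s) powr \<rho> * norm u) * (H * (t - s) powr \<rho> * norm w)"
    unfolding abs_mult using H by (intro mult_mono 1 2) auto
  also have "\<dots> = norm u * norm w * H\<^sup>2 * ((t - s) powr \<rho> * (t - s) powr \<rho>)"
    by (simp add: power2_eq_square algebra_simps)
  also have "\<dots> = norm u * norm w * H\<^sup>2 * (t - s) powr (2 * \<rho>)"
    by (simp add: powr_add[symmetric])
  finally show ?thesis .
qed

lemma prod_bound:
  assumes hx: "pathhold H \<rho> x" and H: "H \<ge> 0" and r: "\<rho> \<ge> 0"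
    and st: "0 \<le> s" "s \<le> r" "r \<le> t" "t \<le> 1"
  shows "\<bar>((x r - x s) \<bullet> u) * ((x t - x r) \<bullet> w)\<bar> \<le> norm u * norm w * H\<^sup>2 * (t - s) powr (2 * \<rho>)"
  using prod_bound2[OF hx H r, where s=s and p=s and q=r and t=t and p'=r and q'=t and u=u and w=w] st by auto

locale pth =
  fixes x :: "real \<Rightarrow> 'v::euclidean_space" and H \<rho> :: real
  assumes hx: "pathhold H \<rho> x" and H: "H \<ge> 0" and rho: "1/2 < \<rho>" "\<rho> \<le> 1"
begin

lemma Xi_D:
  assumes "0 \<le> a" "a \<le> s" "s \<le> r" "r \<le> t" "t \<le> 1"
  shows "\<bar>Xi x a u w s t - Xi x a u w s r - Xi x a u w r t\<bar> \<le> (norm u * norm w * H\<^sup>2) * (t - s) powr (2 * \<rho>)"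
  unfolding Xi_delta abs_minus_cancel using prod_bound[OF hx H] rho assms by auto

lemma S2_props:
  assumes "0 \<le> a" "a \<le> b" "b \<le> 1"
  shows "rlim a b (Xi x a u w) (S2 x a b u w)"
    "\<bar>S2 x a b u w\<bar> \<le> norm u * norm w * H\<^sup>2 * Zinf (2 * \<rho>) * (b - a) powr (2 * \<rho>)"
proof -
  have D: "\<bar>Xi x a u w s t - Xi x a u w s r - Xi x a u w r t\<bar> \<le> (norm u * norm w * H\<^sup>2) * (t - s) powr (2 * \<rho>)"
    if "a \<le> s" "s \<le> r" "r \<le> t" "t \<le> b" for s r t
    using Xi_D assms that by auto
  obtain L where L: "rlim a b (Xi x a u w) L"
    "\<bar>L - Xi x a u w a b\<bar> \<le> (norm u * norm w * H\<^sup>2) * Zinf (2 * \<rho>) * (b - a) powr (2 * \<rho>)"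
    using young[of "2 * \<rho>" "norm u * norm w * H\<^sup>2" a b "Xi x a u w", OF _ _ assms(2) D] rho by auto
  have "S2 x a b u w = L" unfolding S2_eq using rlim_the[OF assms(2) L(1)] .
  then show "rlim a b (Xi x a u w) (S2 x a b u w)"
    "\<bar>S2 x a b u w\<bar> \<le> norm u * norm w * H\<^sup>2 * Zinf (2 * \<rho>) * (b - a) powr (2 * \<rho>)"
    using L by (auto simp: Xi_def)
qed

lemma S2_unique:
  assumes "0 \<le> a" "a \<le> b" "b \<le> 1" "rlim a b (Xi x a u w) L"
  shows "S2 x a b u w = L"
  using rlim_unique[OF assms(2) S2_props(1)[OF assms(1-3)] assms(4)] .

lemma S2_add_left:
  assumes "0 \<le> a" "a \<le> b" "b \<le> 1"
  shows "S2 x a b (u1 + u2) w = S2 x a b u1 w + S2 x a b u2 w"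
proof -
  have "Xi x a (u1 + u2) w = (\<lambda>s t. Xi x a u1 w s t + Xi x a u2 w s t)"
    unfolding Xi_def by (auto simp: inner_add_right algebra_simps)
  then show ?thesis using S2_unique[OF assms] rlim_add[OF S2_props(1)[OF assms] S2_props(1)[OF assms]]
    by metis
qed

lemma S2_add_right:
  assumes "0 \<le> a" "a \<le> b" "b \<le> 1"
  shows "S2 x a b u (w1 + w2) = S2 x a b u w1 + S2 x a b u w2"
proof -
  have "Xi x a u (w1 + w2) = (\<lambda>s t. Xi x a u w1 s t + Xi x a u w2 s t)"
    unfolding Xi_def by (auto simp: inner_add_right algebra_simps)
  then show ?thesis using S2_unique[OF assms] rlim_add[OF S2_props(1)[OF assms] S2_props(1)[OF assms]]
    by metis
qed

lemma S2_scale_left: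
  assumes "0 \<le> a" "a \<le> b" "b \<le> 1"
  shows "S2 x a b (k *\<^sub>R u) w = k * S2 x a b u w"
proof -
  have "Xi x a (k *\<^sub>R u) w = (\<lambda>s t. k * Xi x a u w s t)"
    unfolding Xi_def by (auto simp: algebra_simps)
  then show ?thesis using S2_unique[OF assms] rlim_cmul[OF S2_props(1)[OF assms]]
    by metis
qed

lemma S2_scale_right:
  assumes "0 \<le> a" "a \<le> b" "b \<le> 1"
  shows "S2 x a b u (k *\<^sub>R w) = k * S2 x a b u w"
proof -
  have "Xi x a u (k *\<^sub>R w) = (\<lambda>s t. k * Xi x a u w s t)"
    unfolding Xi_def by (auto simp: algebra_simps)
  then show ?thesis using S2_unique[OF assms] rlim_cmul[OF S2_props(1)[OF assms]]
    by metis
qed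

lemma S2_bilinear:
  assumes "0 \<le> a" "a \<le> b" "b \<le> 1"
  shows "bilinear (S2 x a b)"
  unfolding bilinear_def
proof (intro conjI allI)
  fix u show "linear (S2 x a b u)"
    by (rule linearI) (use S2_add_right[OF assms] S2_scale_right[OF assms] in auto)
next
  fix w show "linear (\<lambda>u. S2 x a b u w)"
    by (rule linearI) (use S2_add_left[OF assms] S2_scale_left[OF assms] in auto)
qed

lemma S2_geo:
  assumes "0 \<le> a" "a \<le> b" "b \<le> 1"
  shows "S2 x a b u w + S2 x a b w u = ((x b - x a) \<bullet> u) * ((x b - x a) \<bullet> w)"
proof -
  define \<phi> where "\<phi> r = ((x r - x a) \<bullet> u) * ((x r - x a) \<bullet> w)" for r
  define \<Delta> where "\<Delta> s t = ((x t - x s) \<bullet> u) * ((x t - x s) \<bullet> w)" for s t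
  have "rlim a b \<Delta> 0"
  proof (rule rlim_small[of "2 * \<rho>" "norm u * norm w * H\<^sup>2"])
    fix s t assume "a \<le> s" "s \<le> t" "t \<le> b"
    then show "\<bar>\<Delta> s t\<bar> \<le> norm u * norm w * H\<^sup>2 * (t - s) powr (2 * \<rho>)"
      unfolding \<Delta>_def using prod_bound2[OF hx H, where s=s and p=s and q=t and t=t and p'=s and q'=t and u=u and w=w] rho assms by auto
  qed (use rho in auto)
  then have "rlim a b (\<lambda>s t. (\<phi> t - \<phi> s) - \<Delta> s t) ((\<phi> b - \<phi> a) - 0)"
    by (intro rlim_diff rlim_tele)
  moreover have "(\<lambda>s t. (\<phi> t - \<phi> s) - \<Delta> s t) = (\<lambda>s t. Xi x a u w s t + Xi x a w u s t)"
    unfolding \<phi>_def \<Delta>_def Xi_def by (auto simp: inner_diff_left algebra_simps)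
  ultimately have "rlim a b (\<lambda>s t. Xi x a u w s t + Xi x a w u s t) (\<phi> b - \<phi> a)" by simp
  moreover have "rlim a b (\<lambda>s t. Xi x a u w s t + Xi x a w u s t) (S2 x a b u w + S2 x a b w u)"
    by (intro rlim_add S2_props(1)[OF assms])
  ultimately show ?thesis using rlim_unique assms unfolding \<phi>_def by fastforce
qed

lemma S2_chen:
  assumes "0 \<le> a" "a \<le> b" "b \<le> c" "c \<le> 1"
  shows "S2 x a c u w = S2 x a b u w + S2 x b c u w + ((x b - x a) \<bullet> u) * ((x c - x b) \<bullet> w)"
proof -
  define \<psi> where "\<psi> r = ((x b - x a) \<bullet> u) * (x r \<bullet> w)" for r
  have "rlim b c (\<lambda>s t. Xi x b u w s t + (\<psi> t - \<psi> s)) (S2 x b c u w + (\<psi> c - \<psi> b))"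
    using assms by (intro rlim_add rlim_tele S2_props(1)) auto
  moreover have "(\<lambda>s t. Xi x b u w s t + (\<psi> t - \<psi> s)) = Xi x a u w"
    unfolding \<psi>_def Xi_def by (auto simp: inner_diff_left algebra_simps)
  ultimately have 1: "rlim b c (Xi x a u w) (S2 x b c u w + (\<psi> c - \<psi> b))" by simp
  have 2: "rlim a c (Xi x a u w) (S2 x a c u w)" using assms by (intro S2_props(1)) auto
  have 3: "rlim a b (Xi x a u w) (S2 x a b u w)" using assms by (intro S2_props(1)) auto
  have "S2 x a c u w = S2 x a b u w + (S2 x b c u w + (\<psi> c - \<psi> b))"
    by (rule rlim_concat[OF assms(2,3) 2 3 1])
  then show ?thesis unfolding \<psi>_def by (simp add: inner_diff_left algebra_simps)
qed

end

definition hold2 :: "real \<Rightarrow> real \<Rightarrow> (real \<times> real \<Rightarrow> 'v::real_normed_vector) \<Rightarrow> bool" where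
  "hold2 H \<rho> X \<longleftrightarrow> (\<forall>p\<in>{0..1} \<times> {0..1}. \<forall>q\<in>{0..1} \<times> {0..1}. norm (X p - X q) \<le> H * dist p q powr \<rho>)"

lemma hold2D: "hold2 H \<rho> X \<Longrightarrow> p \<in> {0..1} \<times> {0..1} \<Longrightarrow> q \<in> {0..1} \<times> {0..1} \<Longrightarrow>
    norm (X p - X q) \<le> H * dist p q powr \<rho>"
  unfolding hold2_def by blast

lemma hold2_swap:
  fixes X :: "real \<times> real \<Rightarrow> 'v::real_normed_vector"
  assumes h: "hold2 H \<rho> X" shows "hold2 H \<rho> (\<lambda>p. X (snd p, fst p))"
  unfolding hold2_def
proof (intro ballI)
  fix p q :: "real \<times> real"
  assume pq: "p \<in> {0..1} \<times> {0..1}" "q \<in> {0..1} \<times> {0..1}"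
  have "dist (snd p, fst p) (snd q, fst q) = dist p q"
    by (cases p; cases q) (simp add: dist_Pair_Pair add.commute)
  moreover have "(snd p, fst p) \<in> {0..1} \<times> {0..1}" "(snd q, fst q) \<in> {0..1} \<times> {0..1}" using pq by auto
  ultimately show "norm (X (snd p, fst p) - X (snd q, fst q)) \<le> H * dist p q powr \<rho>"
    using hold2D[OF h] by metis
qed

lemma row_hold:
  fixes X :: "real \<times> real \<Rightarrow> 'v::real_normed_vector" and t :: real
  assumes h: "hold2 H \<rho> X" "0 \<le> t" "t \<le> 1" shows "pathhold H \<rho> (\<lambda>s. X (s, t))"
  unfolding pathhold_def
proof (intro allI impI)
  fix s s' :: real assume ss: "s \<in> {0..1}" "s' \<in> {0..1}"
  have "dist (s, t) (s', t) = \<bar>s - s'\<bar>" by (simp add: dist_Pair_Pair dist_real_def)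
  then show "norm (X (s, t) - X (s', t)) \<le> H * \<bar>s - s'\<bar> powr \<rho>"
    using hold2D[OF h(1), of "(s, t)" "(s', t)"] h ss by auto
qed

lemma col_hold:
  fixes X :: "real \<times> real \<Rightarrow> 'v::real_normed_vector" and s :: real
  assumes h: "hold2 H \<rho> X" "0 \<le> s" "s \<le> 1" shows "pathhold H \<rho> (\<lambda>t. X (s, t))"
  unfolding pathhold_def
proof (intro allI impI)
  fix t t' :: real assume ss: "t \<in> {0..1}" "t' \<in> {0..1}"
  have "dist (s, t) (s, t') = \<bar>t - t'\<bar>" by (simp add: dist_Pair_Pair dist_real_def)
  then show "norm (X (s, t) - X (s, t')) \<le> H * \<bar>t - t'\<bar> powr \<rho>"
    using hold2D[OF h(1), of "(s, t)" "(s, t')"] h ss by auto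
qed

lemma min_geo:
  fixes x A B :: real
  assumes "x \<le> K * A\<^sup>2" "x \<le> K * B\<^sup>2" "A \<ge> 0" "B \<ge> 0" "K \<ge> 0"
  shows "x \<le> K * A * B"
proof (cases "A \<le> B")
  case True
  then have "A\<^sup>2 \<le> A * B" using assms by (simp add: power2_eq_square mult_left_mono)
  then show ?thesis using assms(1,5) by (smt (verit) mult_left_mono mult.assoc)
next
  case False
  then have "B\<^sup>2 \<le> A * B" using assms by (simp add: power2_eq_square mult_right_mono)
  then show ?thesis using assms(2,5) by (smt (verit) mult_left_mono mult.assoc)
qed

lemma sq_powr: "y \<ge> 0 \<Longrightarrow> (y powr (\<rho> / 2))\<^sup>2 = y powr (\<rho>::real)"
  by (simp add: power2_eq_square powr_add[symmetric])

locale sfc =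
  fixes X :: "real \<times> real \<Rightarrow> 'v::euclidean_space" and H \<rho> :: real
  assumes h2: "hold2 H \<rho> X" and H: "H \<ge> 0" and rho: "2/3 < \<rho>" "\<rho> \<le> 1"
begin

lemma rowp: "0 \<le> t \<Longrightarrow> t \<le> 1 \<Longrightarrow> pth (\<lambda>s. X (s, t)) H \<rho>"
  unfolding pth_def using row_hold[OF h2] H rho by auto

lemma Xpt: "0 \<le> s \<Longrightarrow> s \<le> 1 \<Longrightarrow> 0 \<le> t \<Longrightarrow> t \<le> 1 \<Longrightarrow> 0 \<le> s' \<Longrightarrow> s' \<le> 1 \<Longrightarrow> 0 \<le> t' \<Longrightarrow> t' \<le> 1 \<Longrightarrow>
    norm (X (s, t) - X (s', t')) \<le> H * dist (s, t) (s', t') powr \<rho>"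
  using hold2D[OF h2, of "(s, t)" "(s', t')"] by auto

lemma rect:
  assumes "0 \<le> s1" "s1 \<le> 1" "0 \<le> s2" "s2 \<le> 1" "0 \<le> t1" "t1 \<le> 1" "0 \<le> t2" "t2 \<le> 1"
  shows "norm (X (s2, t1) - X (s1, t1) - (X (s2, t2) - X (s1, t2)))
    \<le> 2 * H * \<bar>s2 - s1\<bar> powr (\<rho> / 2) * \<bar>t2 - t1\<bar> powr (\<rho> / 2)"
proof (rule min_geo)
  have "norm (X (s2, t1) - X (s1, t1) - (X (s2, t2) - X (s1, t2)))
     \<le> norm (X (s2, t1) - X (s1, t1)) + norm (X (s2, t2) - X (s1, t2))" by (rule norm_triangle_ineq4)
  also have "\<dots> \<le> H * \<bar>s2 - s1\<bar> powr \<rho> + H * \<bar>s2 - s1\<bar> powr \<rho>"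
    using Xpt[of s2 t1 s1 t1] Xpt[of s2 t2 s1 t2] assms by (intro add_mono) (auto simp: dist_Pair_Pair dist_real_def)
  finally show "norm (X (s2, t1) - X (s1, t1) - (X (s2, t2) - X (s1, t2))) \<le> 2 * H * (\<bar>s2 - s1\<bar> powr (\<rho> / 2))\<^sup>2"
    by (simp add: sq_powr)
  have "norm (X (s2, t1) - X (s1, t1) - (X (s2, t2) - X (s1, t2)))
     = norm ((X (s1, t2) - X (s1, t1)) - (X (s2, t2) - X (s2, t1)))" by (simp add: algebra_simps)
  also have "\<dots> \<le> norm (X (s1, t2) - X (s1, t1)) + norm (X (s2, t2) - X (s2, t1))" by (rule norm_triangle_ineq4)
  also have "\<dots> \<le> H * \<bar>t2 - t1\<bar> powr \<rho> + H * \<bar>t2 - t1\<bar> powr \<rho>"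
    using Xpt[of s1 t2 s1 t1] Xpt[of s2 t2 s2 t1] assms by (intro add_mono) (auto simp: dist_Pair_Pair dist_real_def)
  finally show "norm (X (s2, t1) - X (s1, t1) - (X (s2, t2) - X (s1, t2))) \<le> 2 * H * (\<bar>t2 - t1\<bar> powr (\<rho> / 2))\<^sup>2"
    by (simp add: sq_powr)
qed (use H in auto)

lemma Ddiff:
  assumes ab: "0 \<le> a" "a \<le> b" "b \<le> 1" and t: "0 \<le> t1" "t1 \<le> 1" "0 \<le> t2" "t2 \<le> 1"
  shows "\<bar>S2 (\<lambda>s. X (s, t1)) a b u w - S2 (\<lambda>s. X (s, t2)) a b u w\<bar>
     \<le> (4 * norm u * norm w * H\<^sup>2 * \<bar>t2 - t1\<bar> powr (\<rho> / 2)) * Zinf (3 * \<rho> / 2) * (b - a) powr (3 * \<rho> / 2)"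
proof -
  interpret r1: pth "\<lambda>s. X (s, t1)" H \<rho> using rowp t by auto
  interpret r2: pth "\<lambda>s. X (s, t2)" H \<rho> using rowp t by auto
  define x where "x = (\<lambda>s. X (s, t1))"
  define y where "y = (\<lambda>s. X (s, t2))"
  define c where "c = 4 * norm u * norm w * H\<^sup>2 * \<bar>t2 - t1\<bar> powr (\<rho> / 2)"
  define \<Xi> where "\<Xi> s t = Xi x a u w s t - Xi y a u w s t" for s t
  have L1: "rlim a b \<Xi> (S2 x a b u w - S2 y a b u w)"
    unfolding \<Xi>_def x_def y_def by (intro rlim_diff r1.S2_props(1) r2.S2_props(1) ab)
  have zb: "\<bar>(x q - x p - (y q - y p)) \<bullet> v\<bar> \<le> norm v * (2 * H * (t - s) powr (\<rho> / 2) * \<bar>t2 - t1\<bar> powr (\<rho> / 2))"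
    if "a \<le> s" "s \<le> p" "p \<le> q" "q \<le> t" "t \<le> b" for s p q t v
  proof -
    have "\<bar>(x q - x p - (y q - y p)) \<bullet> v\<bar> \<le> norm (x q - x p - (y q - y p)) * norm v" by (rule inner_bound)
    also have "\<dots> \<le> (2 * H * \<bar>q - p\<bar> powr (\<rho> / 2) * \<bar>t2 - t1\<bar> powr (\<rho> / 2)) * norm v"
      unfolding x_def y_def using rect[of p q t1 t2] that ab t by (intro mult_right_mono) auto
    also have "\<dots> \<le> (2 * H * (t - s) powr (\<rho> / 2) * \<bar>t2 - t1\<bar> powr (\<rho> / 2)) * norm v"
      using that H rho by (intro mult_right_mono mult_left_mono powr_mono2) auto
    finally show ?thesis by (simp add: algebra_simps)
  qed
  have D: "\<bar>\<Xi> s t - \<Xi> s r - \<Xi> r t\<bar> \<le> c * (t - s) powr (3 * \<rho> / 2)"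
    if "a \<le> s" "s \<le> r" "r \<le> t" "t \<le> b" for s r t
  proof -
    have e: "\<Xi> s t - \<Xi> s r - \<Xi> r t = - (((x r - x s - (y r - y s)) \<bullet> u) * ((x t - x r) \<bullet> w)
                + ((y r - y s) \<bullet> u) * ((x t - x r - (y t - y r)) \<bullet> w))"
      using Xi_delta[of x a u w s t r] Xi_delta[of y a u w s t r] unfolding \<Xi>_def
      by (simp add: inner_diff_left algebra_simps)
    have bx: "\<bar>(x t - x r) \<bullet> w\<bar> \<le> H * (t - s) powr \<rho> * norm w"
      unfolding x_def using incr_bound[OF row_hold[OF h2] H] that ab t rho by auto
    have by': "\<bar>(y r - y s) \<bullet> u\<bar> \<le> H * (t - s) powr \<rho> * norm u"
      unfolding y_def using incr_bound[OF row_hold[OF h2] H] that ab t rho by auto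
    have z1: "\<bar>(x r - x s - (y r - y s)) \<bullet> u\<bar> \<le> norm u * (2 * H * (t - s) powr (\<rho> / 2) * \<bar>t2 - t1\<bar> powr (\<rho> / 2))"
      using zb[of s s r t u] that by auto
    have z2: "\<bar>(x t - x r - (y t - y r)) \<bullet> w\<bar> \<le> norm w * (2 * H * (t - s) powr (\<rho> / 2) * \<bar>t2 - t1\<bar> powr (\<rho> / 2))"
      using zb[of s r t t w] that by auto
    define P where "P = (t - s) powr (\<rho> / 2)"
    define Q where "Q = (t - s) powr \<rho>"
    define T where "T = \<bar>t2 - t1\<bar> powr (\<rho> / 2)"
    have PQ: "P * Q = (t - s) powr (3 * \<rho> / 2)" unfolding P_def Q_def by (simp add: powr_add[symmetric])
    have nn: "P \<ge> 0" "Q \<ge> 0" "T \<ge> 0" unfolding P_def Q_def T_def by auto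
    have "\<bar>\<Xi> s t - \<Xi> s r - \<Xi> r t\<bar> \<le> \<bar>((x r - x s - (y r - y s)) \<bullet> u) * ((x t - x r) \<bullet> w)\<bar>
                + \<bar>((y r - y s) \<bullet> u) * ((x t - x r - (y t - y r)) \<bullet> w)\<bar>"
      unfolding e by (simp add: abs_triangle_ineq)
    also have "\<dots> \<le> (norm u * (2 * H * P * T)) * (H * Q * norm w) + (H * Q * norm u) * (norm w * (2 * H * P * T))"
      unfolding abs_mult P_def Q_def T_def using z1 z2 bx by' H
      by (intro add_mono mult_mono) auto
    also have "\<dots> = c * (P * Q)" unfolding c_def T_def by (simp add: power2_eq_square algebra_simps)
    finally show ?thesis unfolding PQ .
  qed
  have c0: "c \<ge> 0" unfolding c_def by auto
  obtain L where L: "rlim a b \<Xi> L" "\<bar>L - \<Xi> a b\<bar> \<le> c * Zinf (3 * \<rho> / 2) * (b - a) powr (3 * \<rho> / 2)"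
    using young[OF _ c0 ab(2) D] rho by auto
  have "L = S2 x a b u w - S2 y a b u w" using rlim_unique[OF ab(2) L(1) L1] .
  moreover have "\<Xi> a b = 0" unfolding \<Xi>_def Xi_def by simp
  ultimately show ?thesis using L(2) unfolding c_def x_def y_def by simp
qed

end

lemma sfc_swap: "sfc X H \<rho> \<Longrightarrow> sfc (\<lambda>p. X (snd p, fst p)) H \<rho>"
  unfolding sfc_def using hold2_swap by blast

lemma tmul_1: "tmul (1, a, A) (1, b, B) = (1, a + b, \<lambda>u w. B u w + tprod_vec a b u w + A u w)"
  unfolding tmul_def by (simp add: add.commute)

lemma tinv_1: "tinv (1, a, A) = (1, - a, \<lambda>u w. - A u w + tprod_vec a a u w)"
  unfolding tinv_def by simp

lemma act_1: "act (1, a, A) E = E"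
  unfolding act_def tmul_def tinv_def tprod_vec_def by simp

definition Qf :: "(real \<times> real \<Rightarrow> 'v::real_inner) \<Rightarrow> real \<Rightarrow> real \<Rightarrow> real \<Rightarrow> real \<Rightarrow> 'v \<Rightarrow> 'v \<Rightarrow> real" where
  "Qf X s1 s2 t1 t2 u w =
    ((X (s2, t1) - X (s1, t1)) \<bullet> u) * ((X (s2, t2) - X (s2, t1)) \<bullet> w)
  - ((X (s2, t1) - X (s1, t1)) \<bullet> u) * ((X (s2, t2) - X (s1, t2)) \<bullet> w)
  - ((X (s2, t2) - X (s2, t1)) \<bullet> u) * ((X (s2, t2) - X (s1, t2)) \<bullet> w)
  + ((X (s2, t2) - X (s1, t2)) \<bullet> u) * ((X (s2, t2) - X (s1, t2)) \<bullet> w)"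

lemma XX_formula:
  "XX_of X s1 s2 t1 t2 u w = S2 (\<lambda>s. X (s, t1)) s1 s2 u w + S2 (\<lambda>t. X (s2, t)) t1 t2 u w
     - S2 (\<lambda>s. X (s, t2)) s1 s2 u w - S2 (\<lambda>t. X (s1, t)) t1 t2 u w + Qf X s1 s2 t1 t2 u w"
  unfolding XX_of_def xh_of_def xv_of_def tmul_1 tinv_1 Qf_def
  by (simp add: tprod_vec_def inner_diff_left inner_add_left algebra_simps)

lemma XX_level01:
  "tmul (tmul (tmul (xh_of X s1 s2 t1) (xv_of X s2 t1 t2)) (tinv (xh_of X s1 s2 t2))) (tinv (xv_of X s1 t1 t2))
    = (1, 0, XX_of X s1 s2 t1 t2)"
  unfolding XX_of_def xh_of_def xv_of_def tmul_1 tinv_1 by (simp add: algebra_simps)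

lemma bilin_intro:
  assumes "\<And>u1 u2 w. E (u1 + u2) w = E u1 w + E u2 w" "\<And>k u w. E (k *\<^sub>R u) w = k * E u w"
    "\<And>u w1 w2. E u (w1 + w2) = E u w1 + E u w2" "\<And>k u w. E u (k *\<^sub>R w) = k * E u w"
  shows "bilinear E"
  unfolding bilinear_def
proof (intro conjI allI)
  fix u show "linear (E u)" by (rule linearI) (use assms in auto)
next
  fix w show "linear (\<lambda>u. E u w)" by (rule linearI) (use assms in auto)
qed

lemma bilinE:
  assumes "bilinear E"
  shows "E (u1 + u2) w = E u1 w + E u2 w" "E (k *\<^sub>R u) w = k * E u w"
    "E u (w1 + w2) = E u w1 + E u w2" "E u (k *\<^sub>R w) = k * E u w"
  using bilinear_ladd[OF assms] bilinear_lmul[OF assms] bilinear_radd[OF assms] bilinear_rmul[OF assms]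
  by auto

context sfc
begin

lemma colp: "0 \<le> s \<Longrightarrow> s \<le> 1 \<Longrightarrow> pth (\<lambda>t. X (s, t)) H \<rho>"
  unfolding pth_def using col_hold[OF h2] H rho by auto

lemma xh_G0:
  assumes "0 \<le> s1" "s1 \<le> s2" "s2 \<le> 1" "0 \<le> t" "t \<le> 1"
  shows "xh_of X s1 s2 t \<in> G0"
proof -
  interpret r: pth "\<lambda>s. X (s, t)" H \<rho> using rowp assms by auto
  define v where "v = X (s2, t) - X (s1, t)"
  define S where "S = S2 (\<lambda>s. X (s, t)) s1 s2"
  define B where "B = (\<lambda>u w. S u w - tprod_vec v v u w / 2)"
  have bS: "bilinear S" unfolding S_def using r.S2_bilinear assms by auto
  have "bilinear B" unfolding B_def
    by (rule bilin_intro) (auto simp: bilinE[OF bS] tprod_vec_def inner_add_right algebra_simps)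
  moreover have "B u w = - B w u" for u w
  proof -
    have g: "S u w + S w u = (v \<bullet> u) * (v \<bullet> w)" unfolding S_def v_def by (rule r.S2_geo[OF assms(1-3)])
    have c: "(v \<bullet> w) * (v \<bullet> u) = (v \<bullet> u) * (v \<bullet> w)" by simp
    show ?thesis unfolding B_def tprod_vec_def using g c by linarith
  qed
  ultimately have "B \<in> lie2" unfolding lie2_def by blast
  moreover have "xh_of X s1 s2 t = texp v B"
    unfolding xh_of_def texp_def B_def S_def v_def by auto
  ultimately show ?thesis unfolding G0_def by blast
qed

lemma xh_chen:
  assumes "0 \<le> s1" "s1 \<le> s2" "s2 \<le> s3" "s3 \<le> 1" "0 \<le> t" "t \<le> 1"
  shows "tmul (xh_of X s1 s2 t) (xh_of X s2 s3 t) = xh_of X s1 s3 t"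
proof -
  interpret r: pth "\<lambda>s. X (s, t)" H \<rho> using rowp assms by auto
  have v: "X (s2, t) - X (s1, t) + (X (s3, t) - X (s2, t)) = X (s3, t) - X (s1, t)" by simp
  have f: "(\<lambda>u w. S2 (\<lambda>s. X (s, t)) s2 s3 u w + tprod_vec (X (s2, t) - X (s1, t)) (X (s3, t) - X (s2, t)) u w
            + S2 (\<lambda>s. X (s, t)) s1 s2 u w) = S2 (\<lambda>s. X (s, t)) s1 s3"
  proof (intro ext)
    fix u w
    show "S2 (\<lambda>s. X (s, t)) s2 s3 u w + tprod_vec (X (s2, t) - X (s1, t)) (X (s3, t) - X (s2, t)) u w
            + S2 (\<lambda>s. X (s, t)) s1 s2 u w = S2 (\<lambda>s. X (s, t)) s1 s3 u w"
      using r.S2_chen[OF assms(1-4), of u w] unfolding tprod_vec_def by linarith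
  qed
  show ?thesis unfolding xh_of_def tmul_1 v f ..
qed

lemma XX_lam2:
  assumes "0 \<le> s1" "s1 \<le> s2" "s2 \<le> 1" "0 \<le> t1" "t1 \<le> t2" "t2 \<le> 1"
  shows "XX_of X s1 s2 t1 t2 \<in> lam2"
proof -
  interpret r1: pth "\<lambda>s. X (s, t1)" H \<rho> using rowp assms by auto
  interpret r2: pth "\<lambda>s. X (s, t2)" H \<rho> using rowp assms by auto
  interpret c1: pth "\<lambda>t. X (s1, t)" H \<rho> using colp assms by auto
  interpret c2: pth "\<lambda>t. X (s2, t)" H \<rho> using colp assms by auto
  have b1: "bilinear (S2 (\<lambda>s. X (s, t1)) s1 s2)" using r1.S2_bilinear assms by auto
  have b2: "bilinear (S2 (\<lambda>s. X (s, t2)) s1 s2)" using r2.S2_bilinear assms by auto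
  have b3: "bilinear (S2 (\<lambda>t. X (s1, t)) t1 t2)" using c1.S2_bilinear assms by auto
  have b4: "bilinear (S2 (\<lambda>t. X (s2, t)) t1 t2)" using c2.S2_bilinear assms by auto
  have "bilinear (XX_of X s1 s2 t1 t2)"
    by (rule bilin_intro)
      (simp_all add: XX_formula bilinE[OF b1] bilinE[OF b2] bilinE[OF b3] bilinE[OF b4] Qf_def
        inner_add_right algebra_simps)
  moreover have "XX_of X s1 s2 t1 t2 u w = - XX_of X s1 s2 t1 t2 w u" for u w
  proof -
    have g1: "S2 (\<lambda>s. X (s, t1)) s1 s2 w u = ((X (s2, t1) - X (s1, t1)) \<bullet> u) * ((X (s2, t1) - X (s1, t1)) \<bullet> w) - S2 (\<lambda>s. X (s, t1)) s1 s2 u w"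
      using r1.S2_geo[of s1 s2 u w] assms by simp
    have g2: "S2 (\<lambda>s. X (s, t2)) s1 s2 w u = ((X (s2, t2) - X (s1, t2)) \<bullet> u) * ((X (s2, t2) - X (s1, t2)) \<bullet> w) - S2 (\<lambda>s. X (s, t2)) s1 s2 u w"
      using r2.S2_geo[of s1 s2 u w] assms by simp
    have g3: "S2 (\<lambda>t. X (s1, t)) t1 t2 w u = ((X (s1, t2) - X (s1, t1)) \<bullet> u) * ((X (s1, t2) - X (s1, t1)) \<bullet> w) - S2 (\<lambda>t. X (s1, t)) t1 t2 u w"
      using c1.S2_geo[of t1 t2 u w] assms by simp
    have g4: "S2 (\<lambda>t. X (s2, t)) t1 t2 w u = ((X (s2, t2) - X (s2, t1)) \<bullet> u) * ((X (s2, t2) - X (s2, t1)) \<bullet> w) - S2 (\<lambda>t. X (s2, t)) t1 t2 u w"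
      using c2.S2_geo[of t1 t2 u w] assms by simp
    show ?thesis unfolding XX_formula g1 g2 g3 g4 Qf_def
      by (simp add: inner_diff_left algebra_simps)
  qed
  ultimately show ?thesis unfolding lam2_def by blast
qed

lemma XX_mult_s:
  assumes "0 \<le> s1" "s1 \<le> s2" "s2 \<le> s3" "s3 \<le> 1" "0 \<le> t1" "t1 \<le> t2" "t2 \<le> 1"
  shows "XX_of X s1 s3 t1 t2 = g1mul (act (xh_of X s1 s2 t1) (XX_of X s2 s3 t1 t2)) (XX_of X s1 s2 t1 t2)"
proof -
  interpret r1: pth "\<lambda>s. X (s, t1)" H \<rho> using rowp assms by auto
  interpret r2: pth "\<lambda>s. X (s, t2)" H \<rho> using rowp assms by auto
  have e: "act (xh_of X s1 s2 t1) E = E" for E unfolding xh_of_def by (rule act_1)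
  show ?thesis unfolding e g1mul_def
  proof (intro ext)
    fix u w
    show "XX_of X s1 s3 t1 t2 u w = XX_of X s2 s3 t1 t2 u w + XX_of X s1 s2 t1 t2 u w"
      unfolding XX_formula r1.S2_chen[OF assms(1-4)] r2.S2_chen[OF assms(1-4)] Qf_def
      by (simp add: inner_diff_left algebra_simps)
  qed
qed

lemma XX_mult_t:
  assumes "0 \<le> s1" "s1 \<le> s2" "s2 \<le> 1" "0 \<le> t1" "t1 \<le> t2" "t2 \<le> t3" "t3 \<le> 1"
  shows "XX_of X s1 s2 t1 t3 = g1mul (XX_of X s1 s2 t1 t2) (act (xv_of X s1 t1 t2) (XX_of X s1 s2 t2 t3))"
proof -
  interpret c1: pth "\<lambda>t. X (s1, t)" H \<rho> using colp assms by auto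
  interpret c2: pth "\<lambda>t. X (s2, t)" H \<rho> using colp assms by auto
  have e: "act (xv_of X s1 t1 t2) E = E" for E unfolding xv_of_def by (rule act_1)
  show ?thesis unfolding e g1mul_def
  proof (intro ext)
    fix u w
    show "XX_of X s1 s2 t1 t3 u w = XX_of X s1 s2 t1 t2 u w + XX_of X s1 s2 t2 t3 u w"
      unfolding XX_formula c1.S2_chen[OF assms(4-7)] c2.S2_chen[OF assms(4-7)] Qf_def
      by (simp add: inner_diff_left algebra_simps)
  qed
qed

end

lemma t2norm_le:
  fixes A :: "'v::euclidean_space tens2"
  assumes "\<And>i j. i \<in> Basis \<Longrightarrow> j \<in> Basis \<Longrightarrow> \<bar>A i j\<bar> \<le> M"
  shows "t2norm A \<le> real DIM('v) * M"
proof -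
  obtain i0 :: 'v where "i0 \<in> Basis" using nonempty_Basis by blast
  then have M: "M \<ge> 0" using assms[of i0 i0] by auto
  have "(\<Sum>i\<in>Basis. \<Sum>j\<in>Basis. (A i j)\<^sup>2) \<le> (\<Sum>i\<in>(Basis::'v set). \<Sum>j\<in>(Basis::'v set). M\<^sup>2)"
  proof (intro sum_mono)
    fix i j assume "i \<in> (Basis::'v set)" "j \<in> (Basis::'v set)"
    then have "\<bar>A i j\<bar> \<le> M" by (rule assms)
    then show "(A i j)\<^sup>2 \<le> M\<^sup>2" by (metis abs_ge_zero power2_abs power_mono)
  qed
  also have "\<dots> = (real DIM('v) * M)\<^sup>2" by (simp add: power2_eq_square)
  finally have "(\<Sum>i\<in>Basis. \<Sum>j\<in>Basis. (A i j)\<^sup>2) \<le> (real DIM('v) * M)\<^sup>2" .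
  then have "sqrt (\<Sum>i\<in>Basis. \<Sum>j\<in>Basis. (A i j)\<^sup>2) \<le> sqrt ((real DIM('v) * M)\<^sup>2)"
    by (simp only: real_sqrt_le_iff)
  then show ?thesis unfolding t2norm_def using M by simp
qed

lemma lam2norm_le:
  fixes A :: "'v::euclidean_space tens2"
  assumes "\<And>i j. i \<in> Basis \<Longrightarrow> j \<in> Basis \<Longrightarrow> \<bar>A i j\<bar> \<le> M"
  shows "lam2norm A \<le> real DIM('v) * M"
proof -
  have "0 \<le> (\<Sum>i\<in>Basis. \<Sum>j\<in>Basis. (A i j)\<^sup>2)" by (intro sum_nonneg) auto
  then have "lam2norm A \<le> t2norm A" unfolding lam2norm_def t2norm_def by simp
  moreover have "t2norm A \<le> real DIM('v) * M" by (rule t2norm_le) (rule assms)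
  ultimately show ?thesis by simp
qed

lemma powr_nat: "x \<ge> 0 \<Longrightarrow> k \<ge> 1 \<Longrightarrow> x powr (real k * a) = (x powr a) ^ k"
proof (induction k)
  case (Suc k)
  show ?case
  proof (cases "k = 0")
    case False
    then have "x powr (real k * a) = (x powr a) ^ k" using Suc by simp
    moreover have "x powr (real (Suc k) * a) = x powr (real k * a) * x powr a"
      by (simp add: powr_add[symmetric] algebra_simps)
    ultimately show ?thesis by simp
  qed simp
qed simp

context sfc
begin

abbreviation "\<sigma> \<equiv> \<rho> / 2"

lemma sq2: "y \<ge> 0 \<Longrightarrow> y powr \<rho> = (y powr \<sigma>)^2"
  using powr_nat[of y 2 \<sigma>] by simp

lemma lvl1_h:
  assumes "0 \<le> s1" "s1 \<le> s2" "s2 \<le> 1" "0 \<le> t" "t \<le> 1"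
  shows "norm (X (s2, t) - X (s1, t)) \<le> H * ((s2 - s1) powr \<sigma>)^2"
  using pathholdD[OF row_hold[OF h2 assms(4,5)], of s2 s1] assms sq2[of "s2 - s1"] by auto

lemma lvl2_h:
  assumes "0 \<le> s1" "s1 \<le> s2" "s2 \<le> 1" "0 \<le> t" "t \<le> 1"
  shows "t2norm (S2 (\<lambda>s. X (s, t)) s1 s2) \<le> real DIM('v) * (H\<^sup>2 * Zinf (2 * \<rho>) * ((s2 - s1) powr \<sigma>)^4)"
proof (rule t2norm_le)
  interpret r: pth "\<lambda>s. X (s, t)" H \<rho> using rowp assms by auto
  fix i j :: 'v assume "i \<in> Basis" "j \<in> Basis"
  then have "\<bar>S2 (\<lambda>s. X (s, t)) s1 s2 i j\<bar> \<le> H\<^sup>2 * Zinf (2 * \<rho>) * (s2 - s1) powr (2 * \<rho>)"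
    using r.S2_props(2)[OF assms(1-3), of i j] by simp
  also have "(s2 - s1) powr (2 * \<rho>) = ((s2 - s1) powr \<sigma>)^4"
    using powr_nat[of "s2 - s1" 4 \<sigma>] assms by simp
  finally show "\<bar>S2 (\<lambda>s. X (s, t)) s1 s2 i j\<bar> \<le> H\<^sup>2 * Zinf (2 * \<rho>) * ((s2 - s1) powr \<sigma>)^4" .
qed

lemma diff1_h:
  assumes "0 \<le> s1" "s1 \<le> 1" "0 \<le> s2" "s2 \<le> 1" "0 \<le> t1" "t1 \<le> 1" "0 \<le> t2" "t2 \<le> 1"
  shows "norm (X (s2, t1) - X (s1, t1) - (X (s2, t2) - X (s1, t2)))
    \<le> 2 * H * \<bar>s2 - s1\<bar> powr \<sigma> * \<bar>t2 - t1\<bar> powr \<sigma>"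
  using rect[OF assms] by simp

lemma diff2_h:
  assumes "0 \<le> s1" "s1 \<le> s2" "s2 \<le> 1" "0 \<le> t1" "t1 \<le> 1" "0 \<le> t2" "t2 \<le> 1"
  shows "t2norm (\<lambda>u w. S2 (\<lambda>s. X (s, t1)) s1 s2 u w - S2 (\<lambda>s. X (s, t2)) s1 s2 u w)
    \<le> real DIM('v) * (4 * H\<^sup>2 * Zinf (3 * \<rho> / 2) * ((s2 - s1) powr \<sigma>)^3 * \<bar>t2 - t1\<bar> powr \<sigma>)"
proof (rule t2norm_le)
  fix i j :: 'v assume "i \<in> Basis" "j \<in> Basis"
  then have "\<bar>S2 (\<lambda>s. X (s, t1)) s1 s2 i j - S2 (\<lambda>s. X (s, t2)) s1 s2 i j\<bar>
     \<le> (4 * H\<^sup>2 * \<bar>t2 - t1\<bar> powr \<sigma>) * Zinf (3 * \<rho> / 2) * (s2 - s1) powr (3 * \<rho> / 2)"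
    using Ddiff[OF assms, of i j] by simp
  also have "(s2 - s1) powr (3 * \<rho> / 2) = ((s2 - s1) powr \<sigma>)^3"
    using powr_nat[of "s2 - s1" 3 \<sigma>] assms by simp
  finally show "\<bar>S2 (\<lambda>s. X (s, t1)) s1 s2 i j - S2 (\<lambda>s. X (s, t2)) s1 s2 i j\<bar>
     \<le> 4 * H\<^sup>2 * Zinf (3 * \<rho> / 2) * ((s2 - s1) powr \<sigma>)^3 * \<bar>t2 - t1\<bar> powr \<sigma>"
    by (simp add: algebra_simps)
qed

lemma abs_prod_le: "\<bar>x\<bar> \<le> A \<Longrightarrow> \<bar>y\<bar> \<le> B \<Longrightarrow> \<bar>x * y\<bar> \<le> A * (B::real)"
  unfolding abs_mult by (rule mult_mono) auto

lemma inner_unit: "u \<in> Basis \<Longrightarrow> norm v \<le> A \<Longrightarrow> \<bar>v \<bullet> u\<bar> \<le> A"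
  using inner_bound[of v u] by (simp add: norm_Basis)

lemma XX_h:
  assumes "0 \<le> s1" "s1 \<le> s2" "s2 \<le> 1" "0 \<le> t1" "t1 \<le> t2" "t2 \<le> 1"
  shows "lam2norm (XX_of X s1 s2 t1 t2) \<le> real DIM('v) * ((4 * H\<^sup>2 * Zinf (3 * \<rho> / 2) + 2 * H\<^sup>2) *
     ((s2 - s1) powr \<sigma> * ((t2 - t1) powr \<sigma>)^3 + ((s2 - s1) powr \<sigma>)^2 * ((t2 - t1) powr \<sigma>)^2
      + ((s2 - s1) powr \<sigma>)^3 * (t2 - t1) powr \<sigma>))"
proof (rule lam2norm_le)
  interpret sw: sfc "\<lambda>p. X (snd p, fst p)" H \<rho> using sfc_swap sfc_axioms by blast
  define P where "P = (s2 - s1) powr \<sigma>"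
  define Q where "Q = (t2 - t1) powr \<sigma>"
  define Z where "Z = Zinf (3 * \<rho> / 2)"
  have PQ: "P \<ge> 0" "Q \<ge> 0" unfolding P_def Q_def by auto
  have Z: "Z \<ge> 0" unfolding Z_def using Zinf_nonneg rho by auto
  fix i j :: 'v assume ij: "i \<in> Basis" "j \<in> Basis"
  have dh: "\<bar>S2 (\<lambda>s. X (s, t1)) s1 s2 i j - S2 (\<lambda>s. X (s, t2)) s1 s2 i j\<bar> \<le> 4 * H\<^sup>2 * Z * P^3 * Q"
  proof -
    have "\<bar>S2 (\<lambda>s. X (s, t1)) s1 s2 i j - S2 (\<lambda>s. X (s, t2)) s1 s2 i j\<bar>
       \<le> (4 * norm i * norm j * H\<^sup>2 * \<bar>t2 - t1\<bar> powr \<sigma>) * Z * (s2 - s1) powr (3 * \<rho> / 2)"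
      unfolding Z_def by (rule Ddiff) (use assms in auto)
    also have "(s2 - s1) powr (3 * \<rho> / 2) = P^3"
      unfolding P_def using powr_nat[of "s2 - s1" 3 \<sigma>] assms by simp
    finally show ?thesis using ij assms unfolding Q_def by (simp add: norm_Basis algebra_simps)
  qed
  have dv: "\<bar>S2 (\<lambda>t. X (s2, t)) t1 t2 i j - S2 (\<lambda>t. X (s1, t)) t1 t2 i j\<bar> \<le> 4 * H\<^sup>2 * Z * P * Q^3"
  proof -
    have "\<bar>S2 (\<lambda>s. X (s2, s)) t1 t2 i j - S2 (\<lambda>s. X (s1, s)) t1 t2 i j\<bar>
       \<le> (4 * norm i * norm j * H\<^sup>2 * \<bar>s1 - s2\<bar> powr \<sigma>) * Z * (t2 - t1) powr (3 * \<rho> / 2)"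
      unfolding Z_def using sw.Ddiff[of t1 t2 s2 s1 i j] assms by simp
    also have "(t2 - t1) powr (3 * \<rho> / 2) = Q^3"
      unfolding Q_def using powr_nat[of "t2 - t1" 3 \<sigma>] assms by simp
    also have "\<bar>s1 - s2\<bar> = s2 - s1" using assms by simp
    finally show ?thesis using ij unfolding P_def by (simp add: norm_Basis algebra_simps)
  qed
  define a where "a = X (s2, t1) - X (s1, t1)"
  define b where "b = X (s2, t2) - X (s2, t1)"
  define c where "c = X (s2, t2) - X (s1, t2)"
  have na: "norm a \<le> H * P^2" unfolding a_def P_def using lvl1_h assms by auto
  have nc: "norm c \<le> H * P^2" unfolding c_def P_def using lvl1_h assms by auto
  have nb: "norm b \<le> H * Q^2" unfolding b_def Q_def using sw.lvl1_h[of t1 t2 s2] assms by simp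
  have nr: "norm (a - c) \<le> 2 * H * P * Q" unfolding a_def c_def P_def Q_def
    using diff1_h[of s1 s2 t1 t2] assms by simp
  have qf: "Qf X s1 s2 t1 t2 i j = (a \<bullet> i) * (b \<bullet> j) - ((a - c) \<bullet> i) * (c \<bullet> j) - (b \<bullet> i) * (c \<bullet> j)"
    unfolding Qf_def a_def b_def c_def by (simp add: inner_diff_left algebra_simps)
  have "\<bar>Qf X s1 s2 t1 t2 i j\<bar> \<le> (H * P^2) * (H * Q^2) + (2 * H * P * Q) * (H * P^2) + (H * Q^2) * (H * P^2)"
    unfolding qf
    using abs_prod_le[OF inner_unit[OF ij(1) na] inner_unit[OF ij(2) nb]]
      abs_prod_le[OF inner_unit[OF ij(1) nr] inner_unit[OF ij(2) nc]]
      abs_prod_le[OF inner_unit[OF ij(1) nb] inner_unit[OF ij(2) nc]]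
    by linarith
  also have "\<dots> = 2 * H\<^sup>2 * P^2 * Q^2 + 2 * H\<^sup>2 * P^3 * Q" by (simp add: power2_eq_square power3_eq_cube algebra_simps)
  finally have q: "\<bar>Qf X s1 s2 t1 t2 i j\<bar> \<le> 2 * H\<^sup>2 * P^2 * Q^2 + 2 * H\<^sup>2 * P^3 * Q" .
  have "\<bar>XX_of X s1 s2 t1 t2 i j\<bar> \<le> 4 * H\<^sup>2 * Z * P^3 * Q + 4 * H\<^sup>2 * Z * P * Q^3 + (2 * H\<^sup>2 * P^2 * Q^2 + 2 * H\<^sup>2 * P^3 * Q)"
    unfolding XX_formula using dh dv q by linarith
  also have "\<dots> \<le> (4 * H\<^sup>2 * Z + 2 * H\<^sup>2) * (P * Q^3 + P^2 * Q^2 + P^3 * Q)"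
  proof -
    have "0 \<le> 2 * H\<^sup>2 * P * Q^3" "0 \<le> 4 * H\<^sup>2 * Z * P^2 * Q^2" using PQ Z by auto
    then show ?thesis by (simp add: algebra_simps)
  qed
  finally show "\<bar>XX_of X s1 s2 t1 t2 i j\<bar> \<le> (4 * H\<^sup>2 * Zinf (3 * \<rho> / 2) + 2 * H\<^sup>2) *
     ((s2 - s1) powr \<sigma> * ((t2 - t1) powr \<sigma>)^3 + ((s2 - s1) powr \<sigma>)^2 * ((t2 - t1) powr \<sigma>)^2
      + ((s2 - s1) powr \<sigma>)^3 * (t2 - t1) powr \<sigma>)" unfolding P_def Q_def Z_def .
qed

end

lemma div_le:
  fixes K m D N :: real
  assumes "0 \<le> m" "0 < D" "K * D \<le> N"
  shows "K * m \<le> N * m / D"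
proof -
  have "K * m = (K * D) * m / D" using assms(2) by simp
  also have "\<dots> \<le> N * m / D" using assms by (intro divide_right_mono mult_right_mono) auto
  finally show ?thesis .
qed

lemma xv_swap: "xv_of X s t1 t2 = xh_of (\<lambda>p. X (snd p, fst p)) t1 t2 s"
  by (simp add: xv_of_def xh_of_def)

lemma omega_pow:
  assumes "C > 0" "C powr (\<rho> / 2) = c" "n \<ge> 1"
  shows "omega C a b powr (real n * (\<rho> / 2)) = (c * \<bar>b - a\<bar> powr (\<rho> / 2))^n"
proof -
  have "omega C a b powr (real n * (\<rho> / 2)) = (omega C a b powr (\<rho> / 2))^n"
    using powr_nat[of "omega C a b" n "\<rho> / 2"] assms unfolding omega_def by auto
  also have "omega C a b powr (\<rho> / 2) = C powr (\<rho> / 2) * \<bar>b - a\<bar> powr (\<rho> / 2)"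
    unfolding omega_def using assms by (intro powr_mult; auto)
  finally show ?thesis using assms by simp
qed

lemma omega_pow1:
  assumes "C > 0" "C powr (\<rho> / 2) = c"
  shows "omega C a b powr (\<rho> / 2) = c * \<bar>b - a\<bar> powr (\<rho> / 2)"
  using omega_pow[OF assms, of 1 a b] by simp

context sfc
begin

lemma xh_holder:
  assumes C: "C > 0" and c: "C powr (\<rho> / 2) = c" "c > 0" and \<beta>: "\<beta> > 0"
    and R1: "H * (\<beta> * fct (real 1 * \<rho>)) \<le> c^2"
    and R2: "2 * H * (\<beta> * fct ((2 * real 1 - 1) * (\<rho> / 2)) * fct (\<rho> / 2)) \<le> c^2"
    and R3: "real DIM('v) * (H\<^sup>2 * Zinf (2 * \<rho>)) * (\<beta> * fct (real 2 * \<rho>)) \<le> c^4"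
    and R4: "real DIM('v) * (4 * H\<^sup>2 * Zinf (3 * \<rho> / 2)) * (\<beta> * fct ((2 * real 2 - 1) * (\<rho> / 2)) * fct (\<rho> / 2)) \<le> c^4"
  shows "\<forall>k\<in>{1, 2::nat}.
      (\<forall>s1 s2 t. 0 \<le> s1 \<and> s1 \<le> s2 \<and> s2 \<le> 1 \<and> 0 \<le> t \<and> t \<le> 1 \<longrightarrow>
         lvlnorm k (xh_of X s1 s2 t) \<le> omega C s1 s2 powr (real k * \<rho>) / (\<beta> * fct (real k * \<rho>))) \<and>
      (\<forall>s1 s2 t1 t2. 0 \<le> s1 \<and> s1 \<le> s2 \<and> s2 \<le> 1 \<and> 0 \<le> t1 \<and> t1 \<le> 1 \<and> 0 \<le> t2 \<and> t2 \<le> 1 \<longrightarrow>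
         lvlnorm k (lvldiff (xh_of X s1 s2 t1) (xh_of X s1 s2 t2)) \<le>
           omega C s1 s2 powr ((2 * real k - 1) * (\<rho> / 2)) * omega C t1 t2 powr (\<rho> / 2)
             / (\<beta> * fct ((2 * real k - 1) * (\<rho> / 2)) * fct (\<rho> / 2)))"
proof -
  have Fpos: "fct x > 0" if "x \<ge> 0" for x unfolding fct_def using that by simp
  have a1: "lvlnorm 1 (xh_of X s1 s2 t) \<le> omega C s1 s2 powr (real 1 * \<rho>) / (\<beta> * fct (real 1 * \<rho>))"
    if "0 \<le> s1 \<and> s1 \<le> s2 \<and> s2 \<le> 1 \<and> 0 \<le> t \<and> t \<le> 1" for s1 s2 t
  proof -
    define A where "A = \<bar>s2 - s1\<bar> powr (\<rho> / 2)"
    have "lvlnorm 1 (xh_of X s1 s2 t) = norm (X (s2, t) - X (s1, t))" unfolding lvlnorm_def xh_of_def by simp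
    also have "\<dots> \<le> H * A^2" using lvl1_h[of s1 s2 t] that unfolding A_def by simp
    also have "\<dots> \<le> c^2 * A^2 / (\<beta> * fct (real 1 * \<rho>))"
      using R1 \<beta> Fpos[of "real 1 * \<rho>"] rho by (intro div_le) auto
    also have "c^2 * A^2 = omega C s1 s2 powr (real 1 * \<rho>)"
      using omega_pow[OF C c(1), of 2 s1 s2] unfolding A_def by (simp add: power_mult_distrib)
    finally show ?thesis .
  qed
  have a2: "lvlnorm 2 (xh_of X s1 s2 t) \<le> omega C s1 s2 powr (real 2 * \<rho>) / (\<beta> * fct (real 2 * \<rho>))"
    if "0 \<le> s1 \<and> s1 \<le> s2 \<and> s2 \<le> 1 \<and> 0 \<le> t \<and> t \<le> 1" for s1 s2 t
  proof -
    define A where "A = \<bar>s2 - s1\<bar> powr (\<rho> / 2)"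
    have "lvlnorm 2 (xh_of X s1 s2 t) = t2norm (S2 (\<lambda>s. X (s, t)) s1 s2)" unfolding lvlnorm_def xh_of_def by simp
    also have "\<dots> \<le> real DIM('v) * (H\<^sup>2 * Zinf (2 * \<rho>)) * A^4"
      using lvl2_h[of s1 s2 t] that unfolding A_def by (simp add: algebra_simps)
    also have "\<dots> \<le> c^4 * A^4 / (\<beta> * fct (real 2 * \<rho>))"
      using R3 \<beta> Fpos[of "real 2 * \<rho>"] rho by (intro div_le) auto
    also have "c^4 * A^4 = omega C s1 s2 powr (real 2 * \<rho>)"
    proof -
      have "real (2::nat) * \<rho> = real (4::nat) * (\<rho> / 2)" by simp
      then show ?thesis using omega_pow[OF C c(1), of 4 s1 s2] unfolding A_def by (simp add: power_mult_distrib)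
    qed
    finally show ?thesis .
  qed
  have c1: "lvlnorm 1 (lvldiff (xh_of X s1 s2 t1) (xh_of X s1 s2 t2)) \<le>
           omega C s1 s2 powr ((2 * real 1 - 1) * (\<rho> / 2)) * omega C t1 t2 powr (\<rho> / 2)
             / (\<beta> * fct ((2 * real 1 - 1) * (\<rho> / 2)) * fct (\<rho> / 2))"
    if "0 \<le> s1 \<and> s1 \<le> s2 \<and> s2 \<le> 1 \<and> 0 \<le> t1 \<and> t1 \<le> 1 \<and> 0 \<le> t2 \<and> t2 \<le> 1" for s1 s2 t1 t2
  proof -
    define A where "A = \<bar>s2 - s1\<bar> powr (\<rho> / 2)"
    define B where "B = \<bar>t2 - t1\<bar> powr (\<rho> / 2)"
    have AB: "A \<ge> 0" "B \<ge> 0" unfolding A_def B_def by auto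
    have "lvlnorm 1 (lvldiff (xh_of X s1 s2 t1) (xh_of X s1 s2 t2)) = norm (X (s2, t1) - X (s1, t1) - (X (s2, t2) - X (s1, t2)))"
      unfolding lvlnorm_def lvldiff_def xh_of_def by simp
    also have "\<dots> \<le> 2 * H * (A * B)" using diff1_h[of s1 s2 t1 t2] that unfolding A_def B_def by (simp add: algebra_simps)
    also have "\<dots> \<le> c^2 * (A * B) / (\<beta> * fct ((2 * real 1 - 1) * (\<rho> / 2)) * fct (\<rho> / 2))"
      using R2 \<beta> Fpos[of "(2 * real 1 - 1) * (\<rho> / 2)"] Fpos[of "\<rho> / 2"] rho AB by (intro div_le) auto
    also have "c^2 * (A * B) = omega C s1 s2 powr ((2 * real 1 - 1) * (\<rho> / 2)) * omega C t1 t2 powr (\<rho> / 2)"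
      using omega_pow1[OF C c(1), of s1 s2] omega_pow1[OF C c(1), of t1 t2] unfolding A_def B_def
      by (simp add: power2_eq_square algebra_simps)
    finally show ?thesis .
  qed
  have c2: "lvlnorm 2 (lvldiff (xh_of X s1 s2 t1) (xh_of X s1 s2 t2)) \<le>
           omega C s1 s2 powr ((2 * real 2 - 1) * (\<rho> / 2)) * omega C t1 t2 powr (\<rho> / 2)
             / (\<beta> * fct ((2 * real 2 - 1) * (\<rho> / 2)) * fct (\<rho> / 2))"
    if "0 \<le> s1 \<and> s1 \<le> s2 \<and> s2 \<le> 1 \<and> 0 \<le> t1 \<and> t1 \<le> 1 \<and> 0 \<le> t2 \<and> t2 \<le> 1" for s1 s2 t1 t2
  proof -
    define A where "A = \<bar>s2 - s1\<bar> powr (\<rho> / 2)"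
    define B where "B = \<bar>t2 - t1\<bar> powr (\<rho> / 2)"
    have AB: "A \<ge> 0" "B \<ge> 0" unfolding A_def B_def by auto
    have "lvlnorm 2 (lvldiff (xh_of X s1 s2 t1) (xh_of X s1 s2 t2)) =
       t2norm (\<lambda>u w. S2 (\<lambda>s. X (s, t1)) s1 s2 u w - S2 (\<lambda>s. X (s, t2)) s1 s2 u w)"
      unfolding lvlnorm_def lvldiff_def xh_of_def by simp
    also have "\<dots> \<le> real DIM('v) * (4 * H\<^sup>2 * Zinf (3 * \<rho> / 2)) * (A^3 * B)"
      using diff2_h[of s1 s2 t1 t2] that unfolding A_def B_def by (simp add: algebra_simps)
    also have "\<dots> \<le> c^4 * (A^3 * B) / (\<beta> * fct ((2 * real 2 - 1) * (\<rho> / 2)) * fct (\<rho> / 2))"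
      using R4 \<beta> Fpos[of "(2 * real 2 - 1) * (\<rho> / 2)"] Fpos[of "\<rho> / 2"] rho AB by (intro div_le) auto
    also have "c^4 * (A^3 * B) = omega C s1 s2 powr ((2 * real 2 - 1) * (\<rho> / 2)) * omega C t1 t2 powr (\<rho> / 2)"
    proof -
      have "(2 * real (2::nat) - 1) * (\<rho> / 2) = real (3::nat) * (\<rho> / 2)" by simp
      then show ?thesis
        using omega_pow[OF C c(1), of 3 s1 s2] omega_pow1[OF C c(1), of t1 t2] unfolding A_def B_def
        by (simp add: power_mult_distrib algebra_simps power3_eq_cube power4_eq_xxxx)
    qed
    finally show ?thesis .
  qed
  show ?thesis
  proof (intro ballI)
    fix k :: nat assume "k \<in> {1, 2}"
    then have "k = 1 \<or> k = 2" by auto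
    then show "(\<forall>s1 s2 t. 0 \<le> s1 \<and> s1 \<le> s2 \<and> s2 \<le> 1 \<and> 0 \<le> t \<and> t \<le> 1 \<longrightarrow>
         lvlnorm k (xh_of X s1 s2 t) \<le> omega C s1 s2 powr (real k * \<rho>) / (\<beta> * fct (real k * \<rho>))) \<and>
      (\<forall>s1 s2 t1 t2. 0 \<le> s1 \<and> s1 \<le> s2 \<and> s2 \<le> 1 \<and> 0 \<le> t1 \<and> t1 \<le> 1 \<and> 0 \<le> t2 \<and> t2 \<le> 1 \<longrightarrow>
         lvlnorm k (lvldiff (xh_of X s1 s2 t1) (xh_of X s1 s2 t2)) \<le>
           omega C s1 s2 powr ((2 * real k - 1) * (\<rho> / 2)) * omega C t1 t2 powr (\<rho> / 2)
             / (\<beta> * fct ((2 * real k - 1) * (\<rho> / 2)) * fct (\<rho> / 2)))"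
    proof
      assume "k = 1" then show ?thesis using a1 c1 by blast
    next
      assume "k = 2" then show ?thesis using a2 c2 by blast
    qed
  qed
qed

lemma XX_holder:
  assumes C: "C > 0" and c: "C powr (\<rho> / 2) = c" "c > 0" and \<beta>: "\<beta> > 0"
    and R5: "\<And>q. q \<in> {1..3} \<Longrightarrow> real DIM('v) * (4 * H\<^sup>2 * Zinf (3 * \<rho> / 2) + 2 * H\<^sup>2) *
        (\<beta> * (fct (real q * (\<rho> / 2)) * fct (real (2 * 2 - q) * (\<rho> / 2)))) \<le> c^4"
  shows "\<forall>s1 s2 t1 t2. 0 \<le> s1 \<and> s1 \<le> s2 \<and> s2 \<le> 1 \<and> 0 \<le> t1 \<and> t1 \<le> t2 \<and> t2 \<le> 1 \<longrightarrow>
         lam2norm (XX_of X s1 s2 t1 t2) \<le> Wk C (\<rho> / 2) 2 s1 s2 t1 t2 / \<beta>"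
proof (intro allI impI)
  fix s1 s2 t1 t2 :: real assume st: "0 \<le> s1 \<and> s1 \<le> s2 \<and> s2 \<le> 1 \<and> 0 \<le> t1 \<and> t1 \<le> t2 \<and> t2 \<le> 1"
  have Fpos: "fct x > 0" if "x \<ge> 0" for x unfolding fct_def using that by simp
  define A where "A = \<bar>s2 - s1\<bar> powr (\<rho> / 2)"
  define B where "B = \<bar>t2 - t1\<bar> powr (\<rho> / 2)"
  define K0 where "K0 = 4 * H\<^sup>2 * Zinf (3 * \<rho> / 2) + 2 * H\<^sup>2"
  define d where "d = real DIM('v)"
  define g where "g q = omega C s1 s2 powr (real q * (\<rho> / 2)) * omega C t1 t2 powr (real (2 * 2 - q) * (\<rho> / 2))
        / (fct (real q * (\<rho> / 2)) * fct (real (2 * 2 - q) * (\<rho> / 2)))" for q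
  have AB: "A \<ge> 0" "B \<ge> 0" unfolding A_def B_def by auto
  have I: "{1..2 * 2 - 1} = {1, 2, 3::nat}" by auto
  have "lam2norm (XX_of X s1 s2 t1 t2) \<le> d * (K0 * (A * B^3 + A^2 * B^2 + A^3 * B))"
    using XX_h[of s1 s2 t1 t2] st unfolding A_def B_def K0_def d_def by simp
  also have "\<dots> = (\<Sum>q\<in>{1..2 * 2 - 1}. d * K0 * (A^q * B^(2 * 2 - q)))"
    unfolding I by (simp add: algebra_simps)
  also have "\<dots> \<le> (\<Sum>q\<in>{1..2 * 2 - 1}. g q / \<beta>)"
  proof (intro sum_mono)
    fix q :: nat assume q: "q \<in> {1..2 * 2 - 1}"
    then have q3: "q \<in> {1..3}" by simp
    have "d * K0 * (A^q * B^(2 * 2 - q)) \<le> c^4 * (A^q * B^(2 * 2 - q)) /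
        (\<beta> * (fct (real q * (\<rho> / 2)) * fct (real (2 * 2 - q) * (\<rho> / 2))))"
      using R5[OF q3] \<beta> Fpos[of "real q * (\<rho> / 2)"] Fpos[of "real (2 * 2 - q) * (\<rho> / 2)"] rho AB
      unfolding d_def K0_def by (intro div_le) auto
    also have "c^4 * (A^q * B^(2 * 2 - q)) = omega C s1 s2 powr (real q * (\<rho> / 2)) * omega C t1 t2 powr (real (2 * 2 - q) * (\<rho> / 2))"
    proof -
      have c4: "c^4 = c^q * c^(2 * 2 - q)" using q3 by (simp add: power_add[symmetric])
      have q1: "1 \<le> q" "1 \<le> 2 * 2 - q" using q3 by auto
      have o1: "omega C s1 s2 powr (real q * (\<rho> / 2)) = (c * A)^q"
        unfolding A_def by (rule omega_pow[OF C c(1) q1(1)])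
      have o2: "omega C t1 t2 powr (real (2 * 2 - q) * (\<rho> / 2)) = (c * B)^(2 * 2 - q)"
        unfolding B_def by (rule omega_pow[OF C c(1) q1(2)])
      show ?thesis unfolding o1 o2 c4 by (simp add: power_mult_distrib)
    qed
    finally show "d * K0 * (A^q * B^(2 * 2 - q)) \<le> g q / \<beta>" unfolding g_def by (simp add: mult_ac)
  qed
  also have "\<dots> = (\<Sum>q\<in>{1..2 * 2 - 1}. g q) / \<beta>" by (simp add: sum_divide_distrib)
  also have "\<dots> \<le> Wk C (\<rho> / 2) 2 s1 s2 t1 t2 / \<beta>"
  proof -
    have g0: "(\<Sum>q\<in>{1..2 * 2 - 1}. g q) \<ge> 0" unfolding g_def
      using Fpos rho by (intro sum_nonneg divide_nonneg_pos mult_nonneg_nonneg) auto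
    have "(1::real) \<le> 2 powr (2 * real (2::nat) * (\<rho> / 2))" using rho by (intro ge_one_powr_ge_zero) auto
    from mult_right_mono[OF this g0]
    have "(\<Sum>q\<in>{1..2 * 2 - 1}. g q) \<le> 2 powr (2 * real (2::nat) * (\<rho> / 2)) * (\<Sum>q\<in>{1..2 * 2 - 1}. g q)"
      by simp
    also have "\<dots> = Wk C (\<rho> / 2) 2 s1 s2 t1 t2" unfolding Wk_def g_def ..
    finally have "(\<Sum>q\<in>{1..2 * 2 - 1}. g q) \<le> Wk C (\<rho> / 2) 2 s1 s2 t1 t2" .
    then show ?thesis using \<beta> by (simp add: divide_right_mono)
  qed
  finally show "lam2norm (XX_of X s1 s2 t1 t2) \<le> Wk C (\<rho> / 2) 2 s1 s2 t1 t2 / \<beta>" .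
qed

end

theorem proposition5p17:
  fixes X :: "real \<times> real \<Rightarrow> 'v::euclidean_space" and \<rho> \<beta> :: real
  assumes "2 / 3 < \<rho>" and "\<rho> \<le> 1"
    and "holder_2d \<rho> X"
    and "\<beta> > beta_bound \<rho>"
  shows "\<exists>C>0. double_group_functional (xh_of X) (xv_of X) (XX_of X)
             \<and> multiplicative_dgf (xh_of X) (xv_of X) (XX_of X)
             \<and> rho_holder_dgf \<rho> \<beta> C (xh_of X) (xv_of X) (XX_of X)"
proof -
  have rho: "2 / 3 < \<rho>" "\<rho> \<le> 1" using assms by auto
  from assms(3) obtain Cc where Cc: "\<forall>p\<in>{0..1} \<times> {0..1}. \<forall>q\<in>{0..1} \<times> {0..1}. norm (X p - X q) \<le> Cc * dist p q powr \<rho>"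
    unfolding holder_2d_def by blast
  define H where "H = \<bar>Cc\<bar>"
  have H0: "H \<ge> 0" unfolding H_def by simp
  have h2: "hold2 H \<rho> X" unfolding hold2_def
  proof (intro ballI)
    fix p q :: "real \<times> real" assume pq: "p \<in> {0..1} \<times> {0..1}" "q \<in> {0..1} \<times> {0..1}"
    have "norm (X p - X q) \<le> Cc * dist p q powr \<rho>" using Cc pq by blast
    also have "\<dots> \<le> H * dist p q powr \<rho>" unfolding H_def by (intro mult_right_mono) auto
    finally show "norm (X p - X q) \<le> H * dist p q powr \<rho>" .
  qed
  interpret S: sfc X H \<rho> unfolding sfc_def using h2 H0 rho by auto
  interpret W: sfc "\<lambda>p. X (snd p, fst p)" H \<rho> using sfc_swap S.sfc_axioms by blast
  have fl: "of_int \<lfloor>1 / \<rho>\<rfloor> = (1::real)"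
  proof -
    have "1 \<le> 1 / \<rho>" "1 / \<rho> < 2" using rho by (auto simp: field_simps)
    then have "\<lfloor>1 / \<rho>\<rfloor> = 1" by (simp add: floor_eq_iff)
    then show ?thesis by simp
  qed
  have "summable (\<lambda>n. (2 / (real n + 1)) powr (\<rho> * (of_int \<lfloor>1 / \<rho>\<rfloor> + 1)))"
    unfolding fl using Zinf_summable[of "2 * \<rho>"] rho by (simp add: mult.commute)
  then have "(\<Sum>n. (2 / (real n + 1)) powr (\<rho> * (of_int \<lfloor>1 / \<rho>\<rfloor> + 1))) \<ge> 0"
    by (rule suminf_nonneg) simp
  then have "beta_bound \<rho> > 0" unfolding beta_bound_def using rho
    by (intro less_le_trans[OF _ max.cobounded1]) (auto intro!: mult_pos_pos add_pos_nonneg)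
  then have \<beta>: "\<beta> > 0" using assms(4) by linarith
  have Fpos: "fct x > 0" if "x \<ge> 0" for x unfolding fct_def using that by simp
  have Z2: "Zinf (2 * \<rho>) \<ge> 0" using Zinf_nonneg rho by auto
  have Z3: "Zinf (3 * \<rho> / 2) \<ge> 0" using Zinf_nonneg rho by auto
  define r1 where "r1 = H * (\<beta> * fct (real 1 * \<rho>))"
  define r2 where "r2 = 2 * H * (\<beta> * fct ((2 * real 1 - 1) * (\<rho> / 2)) * fct (\<rho> / 2))"
  define r3 where "r3 = real DIM('v) * (H\<^sup>2 * Zinf (2 * \<rho>)) * (\<beta> * fct (real 2 * \<rho>))"
  define r4 where "r4 = real DIM('v) * (4 * H\<^sup>2 * Zinf (3 * \<rho> / 2)) * (\<beta> * fct ((2 * real 2 - 1) * (\<rho> / 2)) * fct (\<rho> / 2))"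
  define r5 where "r5 q = real DIM('v) * (4 * H\<^sup>2 * Zinf (3 * \<rho> / 2) + 2 * H\<^sup>2) *
        (\<beta> * (fct (real q * (\<rho> / 2)) * fct (real (2 * 2 - q) * (\<rho> / 2))))" for q :: nat
  have "fct (real 1 * \<rho>) > 0" using Fpos rho by simp
  then have r1p: "r1 \<ge> 0" unfolding r1_def using H0 \<beta> by simp
  have r2p: "r2 \<ge> 0" unfolding r2_def using H0 \<beta> Fpos[of "(2 * real 1 - 1) * (\<rho> / 2)"] Fpos[of "\<rho> / 2"] rho by auto
  have r3p: "r3 \<ge> 0" unfolding r3_def using H0 \<beta> Fpos[of "real 2 * \<rho>"] rho Z2 by auto
  have r4p: "r4 \<ge> 0" unfolding r4_def using H0 \<beta> Fpos[of "(2 * real 2 - 1) * (\<rho> / 2)"] Fpos[of "\<rho> / 2"] rho Z3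
    by auto
  have r5p: "r5 q \<ge> 0" for q unfolding r5_def using H0 \<beta> Fpos[of "real q * (\<rho> / 2)"] Fpos[of "real (2 * 2 - q) * (\<rho> / 2)"] rho Z3
    by (intro mult_nonneg_nonneg) auto
  define M where "M = 1 + r1 + r2 + r3 + r4 + (\<Sum>q\<in>{1..3}. r5 q)"
  have s5: "(\<Sum>q\<in>{1..3}. r5 q) \<ge> 0" using r5p by (intro sum_nonneg) auto
  have M1: "M \<ge> 1" unfolding M_def using r1p r2p r3p r4p s5 by linarith
  define c where "c = sqrt M"
  define C where "C = M powr (1 / \<rho>)"
  have c0: "c > 0" unfolding c_def using M1 by simp
  have C0: "C > 0" unfolding C_def using M1 by simp
  have c2: "c^2 = M" unfolding c_def using M1 by simp
  have c4: "c^4 \<ge> M"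
  proof -
    have "c^4 = M * M" using c2 by (metis power2_eq_square numeral_Bit0 power_add)
    also have "\<dots> \<ge> M * 1" using M1 by (intro mult_left_mono) auto
    finally show ?thesis by simp
  qed
  have Cc: "C powr (\<rho> / 2) = c"
  proof -
    have "C powr (\<rho> / 2) = M powr (1 / \<rho> * (\<rho> / 2))" unfolding C_def by (simp add: powr_powr)
    also have "1 / \<rho> * (\<rho> / 2) = 1 / 2" using rho by (simp add: field_simps)
    finally show ?thesis unfolding c_def using M1 by (simp add: powr_half_sqrt)
  qed
  have R1: "r1 \<le> c^2" unfolding c2 M_def using r2p r3p r4p s5 by linarith
  have R2: "r2 \<le> c^2" unfolding c2 M_def using r1p r3p r4p s5 by linarith
  have R3: "r3 \<le> c^4" using c4 unfolding M_def using r1p r2p r4p s5 by linarith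
  have R4: "r4 \<le> c^4" using c4 unfolding M_def using r1p r2p r3p s5 by linarith
  have R5: "r5 q \<le> c^4" if "q \<in> {1..3}" for q
  proof -
    have "r5 q \<le> (\<Sum>q\<in>{1..3}. r5 q)" using that r5p by (intro member_le_sum) auto
    then show ?thesis using c4 unfolding M_def using r1p r2p r3p r4p by linarith
  qed
  note hX = S.xh_holder[OF C0 Cc c0 \<beta> R1[unfolded r1_def] R2[unfolded r2_def] R3[unfolded r3_def] R4[unfolded r4_def]]
  note hW = W.xh_holder[OF C0 Cc c0 \<beta> R1[unfolded r1_def] R2[unfolded r2_def] R3[unfolded r3_def] R4[unfolded r4_def]]
  note hXX = S.XX_holder[OF C0 Cc c0 \<beta> R5[unfolded r5_def]]
  have DG: "double_group_functional (xh_of X) (xv_of X) (XX_of X)"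
  proof -
    have d1: "\<forall>s1 s2 t. 0 \<le> s1 \<and> s1 \<le> s2 \<and> s2 \<le> 1 \<and> 0 \<le> t \<and> t \<le> 1 \<longrightarrow> xh_of X s1 s2 t \<in> G0"
      using S.xh_G0 by blast
    have d2: "\<forall>s t1 t2. 0 \<le> s \<and> s \<le> 1 \<and> 0 \<le> t1 \<and> t1 \<le> t2 \<and> t2 \<le> 1 \<longrightarrow> xv_of X s t1 t2 \<in> G0"
      unfolding xv_swap using W.xh_G0 by blast
    have d3: "\<forall>s1 s2 t1 t2. 0 \<le> s1 \<and> s1 \<le> s2 \<and> s2 \<le> 1 \<and> 0 \<le> t1 \<and> t1 \<le> t2 \<and> t2 \<le> 1 \<longrightarrow>
        XX_of X s1 s2 t1 t2 \<in> lam2" using S.XX_lam2 by blast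
    have d4: "\<forall>s1 s2 s3 t. 0 \<le> s1 \<and> s1 \<le> s2 \<and> s2 \<le> s3 \<and> s3 \<le> 1 \<and> 0 \<le> t \<and> t \<le> 1 \<longrightarrow>
        tmul (xh_of X s1 s2 t) (xh_of X s2 s3 t) = xh_of X s1 s3 t" using S.xh_chen by blast
    have d5: "\<forall>s t1 t2 t3. 0 \<le> s \<and> s \<le> 1 \<and> 0 \<le> t1 \<and> t1 \<le> t2 \<and> t2 \<le> t3 \<and> t3 \<le> 1 \<longrightarrow>
        tmul (xv_of X s t1 t2) (xv_of X s t2 t3) = xv_of X s t1 t3"
      unfolding xv_swap using W.xh_chen by blast
    have d6: "\<forall>s1 s2 t1 t2. 0 \<le> s1 \<and> s1 \<le> s2 \<and> s2 \<le> 1 \<and> 0 \<le> t1 \<and> t1 \<le> t2 \<and> t2 \<le> 1 \<longrightarrow>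
        (1, 0, XX_of X s1 s2 t1 t2) =
          tmul (tmul (tmul (xh_of X s1 s2 t1) (xv_of X s2 t1 t2)) (tinv (xh_of X s1 s2 t2))) (tinv (xv_of X s1 t1 t2))"
      using XX_level01 by metis
    show ?thesis unfolding double_group_functional_def using d1 d2 d3 d4 d5 d6 by blast
  qed
  have MU: "multiplicative_dgf (xh_of X) (xv_of X) (XX_of X)"
    unfolding multiplicative_dgf_def using S.XX_mult_s S.XX_mult_t by blast
  have RH: "rho_holder_dgf \<rho> \<beta> C (xh_of X) (xv_of X) (XX_of X)"
    unfolding rho_holder_dgf_def Let_def
  proof (intro conjI ballI)
    fix k :: nat assume k: "k \<in> {1, 2}"
    note a = hX[rule_format, OF k] and b = hW[rule_format, OF k]
    show "\<forall>s1 s2 t. 0 \<le> s1 \<and> s1 \<le> s2 \<and> s2 \<le> 1 \<and> 0 \<le> t \<and> t \<le> 1 \<longrightarrow>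
         lvlnorm k (xh_of X s1 s2 t) \<le> omega C s1 s2 powr (real k * \<rho>) / (\<beta> * fct (real k * \<rho>))"
      using a by blast
    show "\<forall>s t1 t2. 0 \<le> s \<and> s \<le> 1 \<and> 0 \<le> t1 \<and> t1 \<le> t2 \<and> t2 \<le> 1 \<longrightarrow>
         lvlnorm k (xv_of X s t1 t2) \<le> omega C t1 t2 powr (real k * \<rho>) / (\<beta> * fct (real k * \<rho>))"
      unfolding xv_swap using b by blast
    show "\<forall>s1 s2 t1 t2. 0 \<le> s1 \<and> s1 \<le> s2 \<and> s2 \<le> 1 \<and> 0 \<le> t1 \<and> t1 \<le> 1 \<and> 0 \<le> t2 \<and> t2 \<le> 1 \<longrightarrow>
         lvlnorm k (lvldiff (xh_of X s1 s2 t1) (xh_of X s1 s2 t2)) \<le>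
           omega C s1 s2 powr ((2 * real k - 1) * (\<rho> / 2)) * omega C t1 t2 powr (\<rho> / 2)
             / (\<beta> * fct ((2 * real k - 1) * (\<rho> / 2)) * fct (\<rho> / 2))"
      using a by blast
    show "\<forall>s1 s2 t1 t2. 0 \<le> t1 \<and> t1 \<le> t2 \<and> t2 \<le> 1 \<and> 0 \<le> s1 \<and> s1 \<le> 1 \<and> 0 \<le> s2 \<and> s2 \<le> 1 \<longrightarrow>
         lvlnorm k (lvldiff (xv_of X s1 t1 t2) (xv_of X s2 t1 t2)) \<le>
           omega C t1 t2 powr ((2 * real k - 1) * (\<rho> / 2)) * omega C s1 s2 powr (\<rho> / 2)
             / (\<beta> * fct ((2 * real k - 1) * (\<rho> / 2)) * fct (\<rho> / 2))"
      unfolding xv_swap using b by blast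
  next
    show "\<forall>s1 s2 t1 t2. 0 \<le> s1 \<and> s1 \<le> s2 \<and> s2 \<le> 1 \<and> 0 \<le> t1 \<and> t1 \<le> t2 \<and> t2 \<le> 1 \<longrightarrow>
         lam2norm (XX_of X s1 s2 t1 t2) \<le> Wk C (\<rho> / 2) 2 s1 s2 t1 t2 / \<beta>"
      by (rule hXX)
  qed
  show ?thesis using C0 DG MU RH by blast
qed

end
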